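(* Let $c_1,c_2\in\mathbb{R}$ with $|c_1|+|c_2|=1$, $c_1c_2\neq0$ and $|c_1|\neq|c_2|$. Let $c_{2k-1}=c_1$, $c_{2k}=c_2$ for $k\in\mathbb{N}$, and let $J$ be the self-adjoint operator in $l^2(\mathbb{N})$ given by the Jacobi matrix with diagonal entries $q_n=n$ and off-diagonal entries $\lambda_n=c_nn$, i.e. $(Ju)_1=u_1+c_1u_2$, $(Ju)_n=\lambda_{n-1}u_{n-1}+nu_n+\lambda_nu_{n+1}$ for $n\ge2$, on its natural domain $\{u\in l^2(\mathbb{N}):Ju\in l^2(\mathbb{N})\}$. Then $\sigma(J)\cap(-\infty,\min\{|c_1|,|c_2|\})=\emptyset$, the spectrum of $J$ in $[\min\{|c_1|,|c_2|\},\frac12)$ is discrete, and for every $\varepsilon>0$ the eigenvalues $\lambda_n$ of $J$ satisfy $$\#\{\lambda_n:\ \lambda_n<\tfrac12-\varepsilon\}\le\frac1\varepsilon.$$ *)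

theory Defs
  imports "HOL-Analysis.Analysis"
begin

(* Sequences in l^2(N) are represented as functions nat => complex, 0-based:
   u i stands for u_{i+1} of the paper. *)

definition l2seq :: "(nat \<Rightarrow> complex) set" where
  "l2seq = {u. summable (\<lambda>n. (cmod (u n))^2)}"

(* periodic coefficient c_n (1-based n): c_{2k-1} = c1, c_{2k} = c2 *)
definition coef :: "real \<Rightarrow> real \<Rightarrow> nat \<Rightarrow> real" where
  "coef c1 c2 n = (if odd n then c1 else c2)"

definition offdiag :: "real \<Rightarrow> real \<Rightarrow> nat \<Rightarrow> real" where
  "offdiag c1 c2 n = coef c1 c2 n * real n"

(* the Jacobi difference expression, 0-based: index i corresponds to n = i+1
   (Ju)_n = lambda_{n-1} u_{n-1} + n u_n + lambda_n u_{n+1},  (Ju)_1 = u_1 + lambda_1 u_2 *)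
definition jac :: "real \<Rightarrow> real \<Rightarrow> (nat \<Rightarrow> complex) \<Rightarrow> nat \<Rightarrow> complex" where
  "jac c1 c2 u i =
     (if i = 0 then 0 else of_real (offdiag c1 c2 i) * u (i - 1))
     + of_real (real (i + 1)) * u i
     + of_real (offdiag c1 c2 (i + 1)) * u (i + 1)"

definition jac_dom :: "real \<Rightarrow> real \<Rightarrow> (nat \<Rightarrow> complex) set" where
  "jac_dom c1 c2 = {u \<in> l2seq. jac c1 c2 u \<in> l2seq}"

(* spectrum: z such that J - z is not a bijection from the domain onto l^2
   (J is closed, so bijectivity is equivalent to bounded invertibility) *)
definition jac_spectrum :: "real \<Rightarrow> real \<Rightarrow> complex set" where
  "jac_spectrum c1 c2 =
     {z. \<not> bij_betw (\<lambda>u n. jac c1 c2 u n - z * u n) (jac_dom c1 c2) l2seq}"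

definition jac_eigenspace :: "real \<Rightarrow> real \<Rightarrow> complex \<Rightarrow> (nat \<Rightarrow> complex) set" where
  "jac_eigenspace c1 c2 z = {u \<in> jac_dom c1 c2. jac c1 c2 u = (\<lambda>n. z * u n)}"

definition jac_eigenvalue :: "real \<Rightarrow> real \<Rightarrow> complex \<Rightarrow> bool" where
  "jac_eigenvalue c1 c2 z \<longleftrightarrow> (\<exists>u \<in> jac_eigenspace c1 c2 z. u \<noteq> (\<lambda>n. 0))"

definition fin_dim_seqs :: "(nat \<Rightarrow> complex) set \<Rightarrow> bool" where
  "fin_dim_seqs E \<longleftrightarrow>
     (\<exists>B. finite B \<and> (\<forall>u\<in>E. \<exists>c. u = (\<lambda>n. \<Sum>b\<in>B. c b * b n)))"

definition jac_disc_spectrum :: "real \<Rightarrow> real \<Rightarrow> complex set" where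
  "jac_disc_spectrum c1 c2 =
     {z \<in> jac_spectrum c1 c2. \<not> z islimpt jac_spectrum c1 c2 \<and>
        jac_eigenvalue c1 c2 z \<and> fin_dim_seqs (jac_eigenspace c1 c2 z)}"

end

theory Submission
  imports Defs "HOL-Library.Diagonal_Subsequence"
begin
lemma bond_nonneg:
  fixes x y :: complex and al be bb :: real
  assumes "al \<ge> 0" "be \<ge> 0" "al * be \<ge> bb^2"
  shows "be * (cmod x)^2 + al * (cmod y)^2 + 2 * bb * Re (y * cnj x) \<ge> 0"
proof -
  have r: "\<bar>Re (y * cnj x)\<bar> \<le> cmod x * cmod y"
    by (metis abs_Re_le_cmod complex_mod_cnj mult.commute norm_mult)
  have "be * (cmod x)^2 + al * (cmod y)^2 \<ge> 2 * \<bar>bb\<bar> * (cmod x * cmod y)"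
  proof -
    define p where "p = cmod x" define q where "q = cmod y"
    have p: "p \<ge> 0" "q \<ge> 0" unfolding p_def q_def by auto
    have "be * p^2 + al * q^2 \<ge> 2 * \<bar>bb\<bar> * (p * q)"
    proof (cases "be = 0")
      case True then have "bb = 0" using assms by (smt (verit) mult_eq_0_iff power2_eq_square zero_le_power2 power_zero_numeral mult_zero_right) 
      then show ?thesis using True assms p by simp
    next
      case False
      then have bpos: "be > 0" using assms by auto
      have "be * (be * p^2 + al * q^2 - 2 * \<bar>bb\<bar> * (p * q)) = (be*p - \<bar>bb\<bar>*q)^2 + (al*be - bb^2) * q^2"
        by (simp add: power2_eq_square algebra_simps)
      also have "\<dots> \<ge> 0" using assms by (intro add_nonneg_nonneg) auto
      finally show ?thesis using bpos by (simp add: zero_le_mult_iff)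
    qed
    then show ?thesis unfolding p_def q_def .
  qed
  moreover have "2 * bb * Re (y * cnj x) \<ge> - (2 * \<bar>bb\<bar> * (cmod x * cmod y))"
  proof -
    have "\<bar>2 * bb * Re (y * cnj x)\<bar> \<le> 2 * \<bar>bb\<bar> * (cmod x * cmod y)"
      using r by (simp add: abs_mult mult_left_mono)
    then show ?thesis by linarith
  qed
  ultimately show ?thesis by linarith
qed

locale jset =
  fixes c1 c2 :: real
  assumes sum1: "\<bar>c1\<bar> + \<bar>c2\<bar> = 1" and nz: "c1 * c2 \<noteq> 0" and neq: "\<bar>c1\<bar> \<noteq> \<bar>c2\<bar>"
begin

definition bb :: "nat \<Rightarrow> real" where "bb i = offdiag c1 c2 (Suc i)"
definition aa :: "nat \<Rightarrow> real" where "aa i = \<bar>coef c1 c2 i\<bar>"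
definition dl :: real where "dl = \<bar>\<bar>c1\<bar> - 1/2\<bar>"
definition al :: "nat \<Rightarrow> real" where
  "al i = aa i * real i + (if aa i > 1/2 then dl else 0)"
definition be :: "nat \<Rightarrow> real" where
  "be i = (if aa (Suc i) > 1/2 then (aa (Suc i) * real (Suc i))^2 / (aa (Suc i) * real (Suc i) + dl)
           else aa (Suc i) * real (Suc i))"
definition tt :: "nat \<Rightarrow> real" where
  "tt i = (if aa (Suc i) > 1/2 then 1/2 - dl^2 / (aa (Suc i) * real (Suc i) + dl) else 1/2)"

lemma aa_cases: "aa i = \<bar>c1\<bar> \<or> aa i = \<bar>c2\<bar>"
  by (simp add: aa_def coef_def)

lemma aa_Suc: "aa (Suc i) = 1 - aa i"
  using sum1 by (auto simp: aa_def coef_def)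

lemma aa_nonneg: "aa i \<ge> 0" by (simp add: aa_def)

lemma aa_pos: "aa i > 0" using nz by (auto simp: aa_def coef_def)

lemma aa_ne_half: "aa i \<noteq> 1/2"
proof
  assume h: "aa i = 1/2"
  from aa_cases[of i] show False
  proof
    assume "aa i = \<bar>c1\<bar>" then show False using h sum1 neq by linarith
  next
    assume "aa i = \<bar>c2\<bar>" then show False using h sum1 neq by linarith
  qed
qed

lemma dl_eq: "dl = \<bar>aa i - 1/2\<bar>"
  using aa_cases[of i] sum1 by (auto simp: dl_def)

lemma dl_lt: "dl < 1/2"
proof -
  have "c1 \<noteq> 0" "c2 \<noteq> 0" using nz by auto
  then have "\<bar>c1\<bar> > 0" "\<bar>c2\<bar> > 0" by auto
  then show ?thesis using sum1 unfolding dl_def abs_less_iff by linarith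
qed

lemma dl_nonneg: "dl \<ge> 0" by (simp add: dl_def)

lemma min_eq: "min \<bar>c1\<bar> \<bar>c2\<bar> = 1/2 - dl"
  using sum1 by (auto simp: dl_def min_def)

lemma bb_sq: "(bb i)^2 = (aa (Suc i) * real (Suc i))^2"
  by (simp add: bb_def aa_def offdiag_def power_mult_distrib)

lemma bb_abs: "\<bar>bb i\<bar> \<le> real (Suc i)"
proof -
  have "aa (Suc i) \<le> 1" using aa_Suc[of i] aa_nonneg[of i] by simp
  then show ?thesis unfolding bb_def offdiag_def aa_def[symmetric]
    by (simp add: abs_mult aa_def mult_le_cancel_right1)
qed

lemma bb_nz: "bb i \<noteq> 0"
  using nz by (auto simp: bb_def offdiag_def coef_def)

lemma al_nonneg: "al i \<ge> 0"
  using aa_nonneg[of i] dl_nonneg by (simp add: al_def)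

lemma be_nonneg: "be i \<ge> 0"
  using aa_nonneg[of "Suc i"] dl_nonneg by (simp add: be_def)

lemma bond: "al (Suc i) * be i \<ge> (bb i)^2"
proof (cases "aa (Suc i) > 1/2")
  case True
  have p: "aa (Suc i) * real (Suc i) + dl > 0"
    using aa_pos[of "Suc i"] dl_nonneg by (simp add: add_pos_nonneg)
  show ?thesis using True p by (simp add: al_def be_def bb_sq)
next
  case False
  then show ?thesis unfolding al_def be_def bb_sq by (simp add: power2_eq_square)
qed

lemma sqdiv: "(X::real) + d > 0 \<Longrightarrow> X^2 / (X + d) - d^2 / (X + d) = X - d"
proof -
  assume p: "X + d > 0"
  have "X^2 / (X + d) - d^2 / (X + d) = (X^2 - d^2) / (X + d)" by (simp add: diff_divide_distrib)
  also have "X^2 - d^2 = (X - d) * (X + d)" by (simp add: power2_eq_square algebra_simps)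
  finally show ?thesis using p by simp
qed

lemma diag_split: "real (Suc i) = tt i + al i + be i"
proof (cases "aa (Suc i) > 1/2")
  case True
  let ?a = "aa (Suc i)"
  have ai: "aa i = 1 - ?a" using aa_Suc[of i] by simp
  have nai: "\<not> aa i > 1/2" using True ai by simp
  have d: "dl = ?a - 1/2" using dl_eq[of "Suc i"] True by simp
  have p: "?a * real (Suc i) + dl > 0"
    using aa_pos[of "Suc i"] dl_nonneg by (simp add: add_pos_nonneg)
  have "(?a * real (Suc i))^2 / (?a * real (Suc i) + dl) - dl^2 / (?a * real (Suc i) + dl)
        = ?a * real (Suc i) - dl"
    using p by (rule sqdiv)
  then show ?thesis using True nai unfolding tt_def al_def be_def ai d
    by (simp add: algebra_simps)
next
  case False
  let ?a = "aa (Suc i)"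
  have ai: "aa i = 1 - ?a" using aa_Suc[of i] by simp
  have lt: "?a < 1/2" using False aa_ne_half[of "Suc i"] by simp
  have nai: "aa i > 1/2" using lt ai by simp
  have d: "dl = 1/2 - ?a" using dl_eq[of "Suc i"] lt by simp
  show ?thesis using False nai unfolding tt_def al_def be_def ai d
    by (simp add: algebra_simps)
qed

lemma tt_le: "tt i \<le> 1/2"
proof -
  have "aa (Suc i) * real (Suc i) + dl \<ge> 0" using aa_nonneg[of "Suc i"] dl_nonneg by simp
  then show ?thesis by (simp add: tt_def)
qed

lemma tt_ge_min: "tt i \<ge> 1/2 - dl"
proof (cases "aa (Suc i) > 1/2")
  case True
  have p: "aa (Suc i) * real (Suc i) + dl \<ge> dl" using aa_nonneg[of "Suc i"] by simp
  have "dl^2 / (aa (Suc i) * real (Suc i) + dl) \<le> dl"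
  proof (cases "dl = 0")
    case False
    then have "dl > 0" using dl_nonneg by simp
    then show ?thesis using p by (simp add: divide_le_eq power2_eq_square mult_left_mono)
  qed simp
  then show ?thesis using True by (simp add: tt_def)
next
  case False then show ?thesis using dl_nonneg by (simp add: tt_def)
qed

lemma tt_ge_inv: "tt i \<ge> 1/2 - 1 / real (Suc i)"
proof (cases "aa (Suc i) > 1/2")
  case True
  have p: "aa (Suc i) * real (Suc i) + dl \<ge> real (Suc i) / 2"
  proof -
    have "(1/2) * real (Suc i) \<le> aa (Suc i) * real (Suc i)"
      using True by (intro mult_right_mono) auto
    then show ?thesis using dl_nonneg by linarith
  qed
  have "dl^2 \<le> (1/2)^2" using dl_lt dl_nonneg by (intro power_mono) auto
  then have "dl^2 \<le> 1/4" by (simp add: power2_eq_square)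
  have "dl^2 / (aa (Suc i) * real (Suc i) + dl) \<le> (1/4) / (real (Suc i) / 2)"
    using \<open>dl^2 \<le> 1/4\<close> p by (intro frac_le) auto
  moreover have "(1/4) / (real (Suc i) / 2) \<le> 1 / real (Suc i)" by (simp add: field_simps)
  ultimately show ?thesis using True unfolding tt_def by simp
next
  case False then show ?thesis by (simp add: tt_def)
qed

end

lemma Re_mult_cnj_self: "Re (z * cnj z) = (cmod z)^2"
  by (simp add: complex_mult_cnj cmod_power2)

lemma Re_swap: "Re (x * cnj y) = Re (y * cnj x)"
  by simp

context jset begin

lemma jac_eq: "jac c1 c2 u i = (if i = 0 then 0 else of_real (bb (i-1)) * u (i-1))
   + of_real (real (Suc i)) * u i + of_real (bb i) * u (Suc i)"
  by (cases i) (simp_all add: jac_def bb_def)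

lemma jac_0: "jac c1 c2 u 0 = of_real (real (Suc 0)) * u 0 + of_real (bb 0) * u (Suc 0)"
  by (simp add: jac_eq)

lemma jac_Suc: "jac c1 c2 u (Suc i) = of_real (bb i) * u i
   + of_real (real (Suc (Suc i))) * u (Suc i) + of_real (bb (Suc i)) * u (Suc (Suc i))"
  by (simp add: jac_eq)

lemma green: "(\<Sum>i<Suc N. jac c1 c2 u i * cnj (v i) - u i * cnj (jac c1 c2 v i))
   = of_real (bb N) * (u (Suc N) * cnj (v N) - u N * cnj (v (Suc N)))"
proof (induction N)
  case 0 then show ?case by (simp add: jac_0 algebra_simps)
next
  case (Suc N)
  then show ?case by (simp add: jac_Suc algebra_simps)
qed

lemma form_bound: "Re (\<Sum>i<Suc M. jac c1 c2 u i * cnj (u i)) \<ge>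
   (\<Sum>i<Suc M. tt i * (cmod (u i))^2) + be M * (cmod (u M))^2 + bb M * Re (u (Suc M) * cnj (u M))"
proof (induction M)
  case 0
  have "Re (jac c1 c2 u 0 * cnj (u 0)) = real (Suc 0) * Re (u 0 * cnj (u 0)) + bb 0 * Re (u (Suc 0) * cnj (u 0))"
    by (simp add: jac_0 algebra_simps)
  then have "Re (jac c1 c2 u 0 * cnj (u 0)) = real (Suc 0) * (cmod (u 0))^2 + bb 0 * Re (u (Suc 0) * cnj (u 0))"
    by (simp only: Re_mult_cnj_self)
  also have "real (Suc 0) = tt 0 + al 0 + be 0" by (rule diag_split)
  finally show ?case using al_nonneg[of 0]
    by (simp add: distrib_right)
next
  case (Suc M)
  have "Re (jac c1 c2 u (Suc M) * cnj (u (Suc M))) = bb M * Re (u (Suc M) * cnj (u M))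
     + real (Suc (Suc M)) * Re (u (Suc M) * cnj (u (Suc M))) + bb (Suc M) * Re (u (Suc (Suc M)) * cnj (u (Suc M)))"
    by (simp add: jac_Suc algebra_simps)
  then have e: "Re (jac c1 c2 u (Suc M) * cnj (u (Suc M))) = bb M * Re (u (Suc M) * cnj (u M))
     + real (Suc (Suc M)) * (cmod (u (Suc M)))^2 + bb (Suc M) * Re (u (Suc (Suc M)) * cnj (u (Suc M)))"
    by (simp only: Re_mult_cnj_self)
  have bd: "be M * (cmod (u M))^2 + al (Suc M) * (cmod (u (Suc M)))^2 + 2 * bb M * Re (u (Suc M) * cnj (u M)) \<ge> 0"
    by (rule bond_nonneg) (auto simp: al_nonneg be_nonneg bond)
  have ds: "real (Suc (Suc M)) = tt (Suc M) + al (Suc M) + be (Suc M)" by (rule diag_split)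
  have "Re (\<Sum>i<Suc (Suc M). jac c1 c2 u i * cnj (u i)) =
        Re (\<Sum>i<Suc M. jac c1 c2 u i * cnj (u i)) + Re (jac c1 c2 u (Suc M) * cnj (u (Suc M)))"
    by simp
  moreover have "(\<Sum>i<Suc (Suc M). tt i * (cmod (u i))^2) = (\<Sum>i<Suc M. tt i * (cmod (u i))^2) + tt (Suc M) * (cmod (u (Suc M)))^2"
    by simp
  moreover have "real (Suc (Suc M)) * (cmod (u (Suc M)))^2 = tt (Suc M) * (cmod (u (Suc M)))^2 + al (Suc M) * (cmod (u (Suc M)))^2 + be (Suc M) * (cmod (u (Suc M)))^2"
    by (simp only: ds distrib_right)
  ultimately show ?case using Suc.IH e bd by linarith
qed

end

definition ip :: "(nat \<Rightarrow> complex) \<Rightarrow> (nat \<Rightarrow> complex) \<Rightarrow> complex" where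
  "ip u v = (\<Sum>n. u n * cnj (v n))"

definition nsq :: "(nat \<Rightarrow> complex) \<Rightarrow> real" where
  "nsq u = (\<Sum>n. (cmod (u n))^2)"

lemma l2_iff: "u \<in> l2seq \<longleftrightarrow> summable (\<lambda>n. (cmod (u n))^2)"
  by (simp add: l2seq_def)

lemma prod_le: "cmod a * cmod b \<le> ((cmod a)^2 + (cmod b)^2) / 2"
  using sum_squares_bound[of "cmod a" "cmod b"] by (simp add: power2_eq_square)

lemma summable_normprod:
  assumes "u \<in> l2seq" "v \<in> l2seq"
  shows "summable (\<lambda>n. cmod (u n) * cmod (v n))"
proof (rule summable_comparison_test')
  show "summable (\<lambda>n. ((cmod (u n))^2 + (cmod (v n))^2) / 2)"
    using assms by (intro summable_divide summable_add) (auto simp: l2_iff)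
  show "norm (cmod (u n) * cmod (v n)) \<le> ((cmod (u n))^2 + (cmod (v n))^2) / 2" for n
    using prod_le[of "u n" "v n"] by simp
qed

lemma summable_ip:
  assumes "u \<in> l2seq" "v \<in> l2seq"
  shows "summable (\<lambda>n. u n * cnj (v n))"
  by (rule summable_comparison_test'[OF summable_normprod[OF assms]]) (simp add: norm_mult)

lemma l2_add: "u \<in> l2seq \<Longrightarrow> v \<in> l2seq \<Longrightarrow> (\<lambda>n. u n + v n) \<in> l2seq"
  unfolding l2_iff
proof (rule summable_comparison_test')
  assume a: "summable (\<lambda>n. (cmod (u n))^2)" "summable (\<lambda>n. (cmod (v n))^2)"
  then show "summable (\<lambda>n. 2 * (cmod (u n))^2 + 2 * (cmod (v n))^2)"
    by (intro summable_add summable_mult) 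
  show "norm ((cmod (u n + v n))^2) \<le> 2 * (cmod (u n))^2 + 2 * (cmod (v n))^2" for n
  proof -
    have "cmod (u n + v n) \<le> cmod (u n) + cmod (v n)" by (rule norm_triangle_ineq)
    then have "(cmod (u n + v n))^2 \<le> (cmod (u n) + cmod (v n))^2"
      by (intro power_mono) auto
    also have "\<dots> \<le> 2 * (cmod (u n))^2 + 2 * (cmod (v n))^2"
      using prod_le[of "u n" "v n"] by (simp add: power2_eq_square algebra_simps)
    finally show ?thesis by simp
  qed
qed

lemma l2_scale: "u \<in> l2seq \<Longrightarrow> (\<lambda>n. c * u n) \<in> l2seq"
proof -
  assume "u \<in> l2seq"
  then have "summable (\<lambda>n. (cmod c)^2 * (cmod (u n))^2)" unfolding l2_iff by (rule summable_mult)
  moreover have "(\<lambda>n. (cmod (c * u n))^2) = (\<lambda>n. (cmod c)^2 * (cmod (u n))^2)"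
    by (simp add: norm_mult power_mult_distrib)
  ultimately show ?thesis unfolding l2_iff by simp
qed

lemma l2_minus: "u \<in> l2seq \<Longrightarrow> (\<lambda>n. - u n) \<in> l2seq"
  unfolding l2_iff by simp

lemma l2_diff: "u \<in> l2seq \<Longrightarrow> v \<in> l2seq \<Longrightarrow> (\<lambda>n. u n - v n) \<in> l2seq"
  using l2_add[of u "\<lambda>n. - v n"] l2_minus[of v] by simp

lemma l2_zero: "(\<lambda>n. 0) \<in> l2seq" unfolding l2_iff by simp

lemma l2_finsupp: "(\<And>n. n \<ge> M \<Longrightarrow> u n = 0) \<Longrightarrow> u \<in> l2seq"
  unfolding l2_iff by (rule summable_finite[of "{..<M}"]) auto

lemma l2_sum: "finite F \<Longrightarrow> (\<And>x. x \<in> F \<Longrightarrow> f x \<in> l2seq) \<Longrightarrow> (\<lambda>n. \<Sum>x\<in>F. f x n) \<in> l2seq"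
proof (induction F rule: finite_induct)
  case empty then show ?case using l2_zero by simp
next
  case (insert x F) then show ?case using l2_add[of "f x" "\<lambda>n. \<Sum>x\<in>F. f x n"] by simp
qed

lemma l2_shift: "u \<in> l2seq \<Longrightarrow> (\<lambda>n. u (Suc n)) \<in> l2seq"
  unfolding l2_iff using summable_Suc_iff[of "\<lambda>n. (cmod (u n))^2"] by simp

lemma harmonic_contra:
  fixes g :: "nat \<Rightarrow> real"
  assumes "summable g" "\<delta> > 0" "eventually (\<lambda>n. real (Suc n) * g n \<ge> \<delta>) sequentially"
  shows False
proof -
  have "eventually (\<lambda>n. norm (\<delta> * inverse (real (Suc n))) \<le> g n) sequentially"
    using assms(3)
  proof eventually_elim
    case (elim n)
    have p: "real (Suc n) > 0" by simp
    have "\<delta> / real (Suc n) \<le> g n" using elim p by (simp add: pos_divide_le_eq mult.commute)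
    moreover have "\<delta> / real (Suc n) \<ge> 0" using assms(2) by simp
    ultimately show ?case by (simp add: divide_inverse)
  qed
  then have "summable (\<lambda>n. \<delta> * inverse (real (Suc n)))"
    by (rule summable_comparison_test_ev[OF _ assms(1)])
  then have "summable (\<lambda>n. inverse (real (Suc n)))"
    using assms(2) summable_cmult_iff[of \<delta> "\<lambda>n. inverse (real (Suc n))"] by simp
  then have "summable (\<lambda>n. inverse (real n))"
    using summable_Suc_iff[of "\<lambda>n. inverse (real n)"] by simp
  then show False using not_summable_harmonic[where 'a=real] by simp
qed

lemma ip_cnj: assumes "u \<in> l2seq" "v \<in> l2seq" shows "ip u v = cnj (ip v u)"
proof -
  have "(\<lambda>n. v n * cnj (u n)) sums ip v u"
    unfolding ip_def using summable_ip[OF assms(2,1)] by (rule summable_sums)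
  then have "(\<lambda>n. cnj (v n * cnj (u n))) sums cnj (ip v u)" by (rule sums_cnj[THEN iffD2])
  moreover have "(\<lambda>n. cnj (v n * cnj (u n))) = (\<lambda>n. u n * cnj (v n))" by (simp add: mult.commute)
  ultimately have "(\<lambda>n. u n * cnj (v n)) sums cnj (ip v u)" by simp
  then show ?thesis unfolding ip_def by (rule sums_unique[symmetric])
qed

context jset begin

abbreviation J where "J \<equiv> jac c1 c2"
abbreviation dom where "dom \<equiv> jac_dom c1 c2"

lemma domD: "u \<in> dom \<Longrightarrow> u \<in> l2seq" "u \<in> dom \<Longrightarrow> J u \<in> l2seq"
  by (auto simp: jac_dom_def)

lemma sym_dom:
  assumes u: "u \<in> dom" and v: "v \<in> dom"
  shows "ip (J u) v = ip u (J v)"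
proof (rule ccontr)
  assume ne: "ip (J u) v \<noteq> ip u (J v)"
  define D where "D = ip (J u) v - ip u (J v)"
  have Dn: "norm D > 0" using ne by (simp add: D_def)
  have "(\<lambda>n. J u n * cnj (v n) - u n * cnj (J v n)) sums D"
    unfolding D_def ip_def
    by (intro sums_diff summable_sums summable_ip) (use u v in \<open>auto simp: jac_dom_def\<close>)
  then have "(\<lambda>N. \<Sum>i<N. J u i * cnj (v i) - u i * cnj (J v i)) \<longlonglongrightarrow> D"
    by (simp add: sums_def)
  then have "(\<lambda>N. \<Sum>i<Suc N. J u i * cnj (v i) - u i * cnj (J v i)) \<longlonglongrightarrow> D"
    by (rule LIMSEQ_Suc)
  then have "(\<lambda>N. norm (\<Sum>i<Suc N. J u i * cnj (v i) - u i * cnj (J v i))) \<longlonglongrightarrow> norm D"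
    by (rule tendsto_norm)
  then have ev: "eventually (\<lambda>N. norm (\<Sum>i<Suc N. J u i * cnj (v i) - u i * cnj (J v i)) > norm D / 2) sequentially"
    using Dn by (intro order_tendstoD) auto
  define g where "g N = cmod (u (Suc N)) * cmod (v N) + cmod (u N) * cmod (v (Suc N))" for N
  have gs: "summable g" unfolding g_def
    using u v by (intro summable_add summable_normprod l2_shift) (auto simp: jac_dom_def)
  have bound: "norm (\<Sum>i<Suc N. J u i * cnj (v i) - u i * cnj (J v i)) \<le> real (Suc N) * g N" for N
  proof -
    have "norm (\<Sum>i<Suc N. J u i * cnj (v i) - u i * cnj (J v i))
        = \<bar>bb N\<bar> * cmod (u (Suc N) * cnj (v N) - u N * cnj (v (Suc N)))"
      by (simp only: green norm_mult norm_of_real)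
    also have "\<dots> \<le> real (Suc N) * g N"
    proof (rule mult_mono)
      show "cmod (u (Suc N) * cnj (v N) - u N * cnj (v (Suc N))) \<le> g N"
        unfolding g_def using norm_triangle_ineq4[of "u (Suc N) * cnj (v N)" "u N * cnj (v (Suc N))"]
        by (simp add: norm_mult)
    qed (use bb_abs[of N] in \<open>auto simp: g_def\<close>)
    finally show ?thesis .
  qed
  have evb: "eventually (\<lambda>N. real (Suc N) * g N \<ge> norm D / 2) sequentially"
    using ev
  proof eventually_elim
    case (elim N) then show ?case using bound[of N] by linarith
  qed
  show False by (rule harmonic_contra[OF gs _ evb]) (use Dn in simp)
qed

lemma ip_real_dom:
  assumes u: "u \<in> dom"
  shows "Im (ip (J u) u) = 0"
proof -
  have "ip (J u) u = ip u (J u)" by (rule sym_dom[OF u u])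
  also have "\<dots> = cnj (ip (J u) u)" using u by (intro ip_cnj) (auto simp: jac_dom_def)
  finally show ?thesis by (metis cnj.sel(2) complex_cnj_cancel_iff equal_neg_zero)
qed

lemma tt_pos: "tt i > 0"
  using tt_ge_min[of i] dl_lt by linarith

lemma summable_tt: "u \<in> l2seq \<Longrightarrow> summable (\<lambda>n. tt n * (cmod (u n))^2)"
proof (rule summable_comparison_test')
  assume "u \<in> l2seq"
  then show "summable (\<lambda>n. (cmod (u n))^2)" by (simp add: l2_iff)
  show "norm (tt n * (cmod (u n))^2) \<le> (cmod (u n))^2" for n
  proof -
    have "norm (tt n * (cmod (u n))^2) = tt n * (cmod (u n))^2" using tt_pos[of n] by simp
    also have "\<dots> \<le> (cmod (u n))^2" using tt_pos[of n] tt_le[of n] by (intro mult_left_le_one_le) auto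
    finally show ?thesis .
  qed
qed

lemma form_dom:
  assumes u: "u \<in> dom"
  shows "Re (ip (J u) u) \<ge> (\<Sum>n. tt n * (cmod (u n))^2)"
proof (rule ccontr)
  assume nt: "\<not> ?thesis"
  define T where "T = (\<Sum>n. tt n * (cmod (u n))^2)"
  define \<gamma> where "\<gamma> = T - Re (ip (J u) u)"
  have gp: "\<gamma> > 0" using nt by (simp add: \<gamma>_def T_def)
  have ul: "u \<in> l2seq" "J u \<in> l2seq" using u by (auto simp: jac_dom_def)
  have "(\<lambda>n. J u n * cnj (u n)) sums ip (J u) u"
    unfolding ip_def using summable_ip[OF ul(2,1)] by (rule summable_sums)
  then have "(\<lambda>N. \<Sum>i<N. J u i * cnj (u i)) \<longlonglongrightarrow> ip (J u) u" by (simp add: sums_def)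
  then have "(\<lambda>N. \<Sum>i<Suc N. J u i * cnj (u i)) \<longlonglongrightarrow> ip (J u) u" by (rule LIMSEQ_Suc)
  then have "(\<lambda>N. Re (\<Sum>i<Suc N. J u i * cnj (u i))) \<longlonglongrightarrow> Re (ip (J u) u)" by (rule tendsto_Re)
  then have ev1: "eventually (\<lambda>N. Re (\<Sum>i<Suc N. J u i * cnj (u i)) < Re (ip (J u) u) + \<gamma>/3) sequentially"
    using gp by (intro order_tendstoD) auto
  have "(\<lambda>n. tt n * (cmod (u n))^2) sums T" unfolding T_def using summable_tt[OF ul(1)] by (rule summable_sums)
  then have "(\<lambda>N. \<Sum>i<N. tt i * (cmod (u i))^2) \<longlonglongrightarrow> T" by (simp add: sums_def)
  then have "(\<lambda>N. \<Sum>i<Suc N. tt i * (cmod (u i))^2) \<longlonglongrightarrow> T" by (rule LIMSEQ_Suc)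
  then have ev2: "eventually (\<lambda>N. (\<Sum>i<Suc N. tt i * (cmod (u i))^2) > T - \<gamma>/3) sequentially"
    using gp by (intro order_tendstoD) auto
  define g where "g N = cmod (u (Suc N)) * cmod (u N)" for N
  have gs: "summable g" unfolding g_def using ul by (intro summable_normprod l2_shift) auto
  have lb: "Re (\<Sum>i<Suc N. J u i * cnj (u i)) \<ge> (\<Sum>i<Suc N. tt i * (cmod (u i))^2) - real (Suc N) * g N" for N
  proof -
    have "\<bar>bb N * Re (u (Suc N) * cnj (u N))\<bar> \<le> real (Suc N) * g N"
    proof -
      have "\<bar>Re (u (Suc N) * cnj (u N))\<bar> \<le> g N"
        unfolding g_def using abs_Re_le_cmod[of "u (Suc N) * cnj (u N)"] by (simp add: norm_mult)
      then show ?thesis unfolding abs_mult using bb_abs[of N]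
        by (intro mult_mono) auto
    qed
    moreover have "be N * (cmod (u N))^2 \<ge> 0" using be_nonneg[of N] by simp
    ultimately show ?thesis using form_bound[of u N] by linarith
  qed
  have evb: "eventually (\<lambda>N. real (Suc N) * g N \<ge> \<gamma>/3) sequentially"
    using ev1 ev2
  proof eventually_elim
    case (elim N)
    define X where "X = real (Suc N) * g N"
    define S where "S = Re (\<Sum>i<Suc N. J u i * cnj (u i))"
    define R where "R = Re (ip (J u) u)"
    define Q where "Q = (\<Sum>i<Suc N. tt i * (cmod (u i))^2)"
    have "S < R + \<gamma>/3" "Q > T - \<gamma>/3" "S \<ge> Q - X" "\<gamma> = T - R"
      using elim lb[of N] unfolding X_def S_def R_def Q_def \<gamma>_def by auto
    then show ?case unfolding X_def[symmetric] by linarith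
  qed
  show False by (rule harmonic_contra[OF gs _ evb]) (use gp in simp)
qed

end

lemma dep_exists:
  fixes v :: "'i \<Rightarrow> 'c \<Rightarrow> complex"
  assumes "finite C"
  shows "finite I \<Longrightarrow> card I > card C \<Longrightarrow> \<exists>b. (\<exists>i\<in>I. b i \<noteq> 0) \<and> (\<forall>c\<in>C. (\<Sum>i\<in>I. b i * v i c) = 0)"
  using assms
proof (induction C arbitrary: I v rule: finite_induct)
  case empty
  then have "I \<noteq> {}" by auto
  then show ?case by (intro exI[of _ "\<lambda>_. 1"]) auto
next
  case (insert c C)
  show ?case
  proof (cases "\<forall>i\<in>I. v i c = 0")
    case True
    have "card I > card C" using insert by simp
    then obtain b where b: "\<exists>i\<in>I. b i \<noteq> 0" "\<forall>x\<in>C. (\<Sum>i\<in>I. b i * v i x) = 0"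
      using insert.IH[OF insert.prems(1)] by blast
    show ?thesis using b True by (intro exI[of _ b]) auto
  next
    case False
    then obtain j where j: "j \<in> I" "v j c \<noteq> 0" by auto
    define I' where "I' = I - {j}"
    define v' where "v' i x = v i x - (v i c / v j c) * v j x" for i x
    have fI': "finite I'" using insert.prems by (simp add: I'_def)
    have cI': "card I' > card C" using insert.prems insert.hyps j by (simp add: I'_def card_Diff_singleton)
    obtain b' where b': "\<exists>i\<in>I'. b' i \<noteq> 0" "\<forall>x\<in>C. (\<Sum>i\<in>I'. b' i * v' i x) = 0"
      using insert.IH[OF fI' cI', of v'] by blast
    define b where "b i = (if i = j then - (\<Sum>k\<in>I'. b' k * v k c) / v j c else b' i)" for i
    have key: "(\<Sum>i\<in>I. b i * v i x) = (\<Sum>i\<in>I'. b' i * v' i x)" for x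
    proof -
      define S where "S = (\<Sum>k\<in>I'. b' k * v k c)"
      define B where "B = (\<Sum>i\<in>I'. b' i * v i x)"
      have "(\<Sum>i\<in>I. b i * v i x) = b j * v j x + (\<Sum>i\<in>I'. b i * v i x)"
        unfolding I'_def using insert.prems(1) j(1) by (rule sum.remove)
      also have "(\<Sum>i\<in>I'. b i * v i x) = B"
        unfolding B_def by (rule sum.cong) (auto simp: b_def I'_def)
      also have "b j * v j x = - (S / v j c * v j x)" by (simp add: b_def S_def)
      also have "- (S / v j c * v j x) + B = (\<Sum>i\<in>I'. b' i * v' i x)"
      proof -
        have "(\<Sum>i\<in>I'. b' i * v' i x) = (\<Sum>i\<in>I'. b' i * v i x - (b' i * v i c) * (v j x / v j c))"
          unfolding v'_def by (rule sum.cong) (auto simp: algebra_simps)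
        also have "\<dots> = B - S * (v j x / v j c)"
          unfolding B_def S_def by (simp add: sum_subtractf sum_distrib_right sum_divide_distrib)
        finally show ?thesis by simp
      qed
      finally show ?thesis .
    qed
    show ?thesis
    proof (intro exI[of _ b] conjI)
      obtain i where "i \<in> I'" "b' i \<noteq> 0" using b'(1) by blast
      then show "\<exists>i\<in>I. b i \<noteq> 0" by (intro bexI[of _ i]) (auto simp: b_def I'_def)
      have "\<forall>x\<in>C. (\<Sum>i\<in>I. b i * v i x) = 0" using b'(2) key by simp
      moreover have "(\<Sum>i\<in>I. b i * v i c) = 0" unfolding key v'_def using j(2) by simp
      ultimately show "\<forall>x\<in>insert c C. (\<Sum>i\<in>I. b i * v i x) = 0" by simp
    qed
  qed
qed

definition ee :: "nat \<Rightarrow> nat \<Rightarrow> complex" where "ee j n = (if n = j then 1 else 0)"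

lemma inj_surj:
  fixes L :: "(nat \<Rightarrow> complex) \<Rightarrow> nat \<Rightarrow> complex"
  assumes fin: "finite I"
    and lin: "\<And>\<beta> i. i \<in> I \<Longrightarrow> L (\<lambda>n. \<Sum>j\<in>I. \<beta> j * ee j n) i = (\<Sum>j\<in>I. \<beta> j * L (ee j) i)"
    and inj: "\<And>v. (\<And>n. n \<notin> I \<Longrightarrow> v n = 0) \<Longrightarrow> (\<And>i. i \<in> I \<Longrightarrow> L v i = 0) \<Longrightarrow> (\<And>n. v n = 0)"
  shows "\<exists>v. (\<forall>n. n \<notin> I \<longrightarrow> v n = 0) \<and> (\<forall>i\<in>I. L v i = f i)"
proof -
  define V where "V x = (case x of None \<Rightarrow> f | Some j \<Rightarrow> L (ee j))" for x
  define K where "K = insert None (Some ` I)"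
  have fK: "finite K" using fin by (simp add: K_def)
  have cK: "card K > card I" using fin by (simp add: K_def card_image)
  obtain b where b: "\<exists>x\<in>K. b x \<noteq> 0" "\<forall>i\<in>I. (\<Sum>x\<in>K. b x * V x i) = 0"
    using dep_exists[OF fin fK cK, of V] by blast
  have sumK: "(\<Sum>x\<in>K. b x * V x i) = b None * f i + (\<Sum>j\<in>I. b (Some j) * L (ee j) i)" for i
    unfolding K_def using fin by (simp add: V_def sum.reindex)
  have supp: "(\<Sum>j\<in>I. \<beta> j * ee j n) = 0" if "n \<notin> I" for \<beta> n
    using that by (intro sum.neutral) (auto simp: ee_def)
  have ev: "(\<Sum>j\<in>I. \<beta> j * ee j n) = \<beta> n" if "n \<in> I" for \<beta> n
    using that fin by (simp add: ee_def if_distrib sum.delta' cong: if_cong)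
  show ?thesis
  proof (cases "b None = 0")
    case True
    define w where "w = (\<lambda>n. \<Sum>j\<in>I. b (Some j) * ee j n)"
    have w0: "w n = 0" for n
    proof (rule inj)
      show "w n = 0" if "n \<notin> I" for n using supp that by (simp add: w_def)
      show "L w i = 0" if "i \<in> I" for i
        using b(2) that sumK[of i] True lin[OF that, of "\<lambda>j. b (Some j)"] by (simp add: w_def)
    qed
    have "\<forall>j\<in>I. b (Some j) = 0"
    proof
      fix j assume "j \<in> I"
      then show "b (Some j) = 0" using ev[OF \<open>j \<in> I\<close>, of "\<lambda>j. b (Some j)"] w0[of j] by (simp add: w_def)
    qed
    then have False using b(1) True by (auto simp: K_def)
    then show ?thesis ..
  next
    case False
    define w where "w = (\<lambda>n. \<Sum>j\<in>I. (- b (Some j) / b None) * ee j n)"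
    show ?thesis
    proof (intro exI[of _ w] conjI allI impI ballI)
      show "w n = 0" if "n \<notin> I" for n using supp[OF that, of "\<lambda>j. - b (Some j) / b None"] by (simp add: w_def)
      fix i assume i: "i \<in> I"
      have "L w i = (\<Sum>j\<in>I. (- b (Some j) / b None) * L (ee j) i)"
        unfolding w_def by (rule lin[OF i])
      also have "\<dots> = - (\<Sum>j\<in>I. b (Some j) * L (ee j) i) / b None"
        by (simp add: sum_divide_distrib sum_negf)
      also have "\<dots> = f i"
      proof -
        have "b None * f i + (\<Sum>j\<in>I. b (Some j) * L (ee j) i) = 0" using b(2) i sumK[of i] by simp
        then have "(\<Sum>j\<in>I. b (Some j) * L (ee j) i) = - (b None * f i)" by (simp only: add_eq_0_iff)
        then show ?thesis using False by simp
      qed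
      finally show "L w i = f i" .
    qed
  qed
qed

context jset begin

lemma jac_lin: "J (\<lambda>n. \<Sum>j\<in>I. \<beta> j * g j n) i = (\<Sum>j\<in>I. \<beta> j * J (g j) i)"
  by (cases i) (simp_all add: jac_def sum_distrib_left sum.distrib algebra_simps)

lemma row_lin: "J (\<lambda>n. \<Sum>j\<in>I. \<beta> j * g j n) i - w * (\<Sum>j\<in>I. \<beta> j * g j i)
   = (\<Sum>j\<in>I. \<beta> j * (J (g j) i - w * g j i))"
  by (simp add: jac_lin sum_distrib_left sum_subtractf algebra_simps)

lemma amgm: "\<eta> > 0 \<Longrightarrow> (x::real) * y \<le> x^2 / (2*\<eta>) + \<eta> * y^2 / 2"
proof -
  assume e: "\<eta> > 0"
  have "0 \<le> (x - \<eta> * y)^2" by simp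
  then have "2 * \<eta> * (x * y) \<le> x^2 + \<eta>^2 * y^2" by (simp add: power2_eq_square algebra_simps)
  then show ?thesis using e by (simp add: field_simps power2_eq_square)
qed

lemma row_cont:
  assumes "\<And>n. (\<lambda>k. X k n) \<longlonglongrightarrow> u n"
  shows "(\<lambda>k. J (X k) i - w * X k i) \<longlonglongrightarrow> J u i - w * u i"
proof (cases i)
  case 0 show ?thesis unfolding 0 jac_0 by (intro tendsto_intros assms)
next
  case (Suc j) show ?thesis unfolding Suc jac_Suc by (intro tendsto_intros assms)
qed

lemma galerkin:
  fixes w :: complex and \<eta> :: real
  assumes eta: "\<eta> > 0"
    and coer: "\<And>v M. (\<And>n. n < K \<or> n \<ge> M \<Longrightarrow> v n = 0) \<Longrightarrow>
        \<eta> * (\<Sum>i<M. (cmod (v i))^2) \<le> cmod (\<Sum>i<M. (J v i - w * v i) * cnj (v i))"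
    and f: "f \<in> l2seq"
  shows "\<exists>u\<in>l2seq. (\<forall>n<K. u n = 0) \<and> (\<forall>i\<ge>K. J u i - w * u i = f i)"
proof -
  define L where "L = (\<lambda>v i. J v i - w * v i)"
  have ex: "\<exists>v. (\<forall>n. n \<notin> {K..<M} \<longrightarrow> v n = 0) \<and> (\<forall>i\<in>{K..<M}. L v i = f i)" for M
  proof (rule inj_surj)
    show "finite {K..<M}" by simp
    show "L (\<lambda>n. \<Sum>j\<in>{K..<M}. \<beta> j * ee j n) i = (\<Sum>j\<in>{K..<M}. \<beta> j * L (ee j) i)" for \<beta> i
      unfolding L_def by (rule row_lin)
    fix v n
    assume supp: "\<And>n. n \<notin> {K..<M} \<Longrightarrow> v n = 0" and z: "\<And>i. i \<in> {K..<M} \<Longrightarrow> L v i = 0"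
    have s0: "(\<Sum>i<M. (J v i - w * v i) * cnj (v i)) = 0"
    proof (rule sum.neutral, rule ballI)
      fix i assume "i \<in> {..<M}"
      then show "(J v i - w * v i) * cnj (v i) = 0"
        using supp[of i] z[of i] by (cases "i < K") (auto simp: L_def)
    qed
    have sp: "v n = 0" if "n < K \<or> n \<ge> M" for n using supp[of n] that by auto
    have "\<eta> * (\<Sum>i<M. (cmod (v i))^2) \<le> 0" using coer[where v=v and M=M, OF sp] s0 by simp
    then have "(\<Sum>i<M. (cmod (v i))^2) \<le> 0" using eta by (simp add: mult_le_0_iff)
    moreover have "(\<Sum>i<M. (cmod (v i))^2) \<ge> 0" by (rule sum_nonneg) auto
    ultimately have "(\<Sum>i<M. (cmod (v i))^2) = 0" by linarith
    then have "\<forall>i\<in>{..<M}. (cmod (v i))^2 = 0"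
      by (subst sum_nonneg_eq_0_iff[symmetric]) auto
    then show "v n = 0" using supp[of n] by (cases "n < M") auto
  qed
  obtain vs where vs: "\<And>M. (\<forall>n. n \<notin> {K..<M} \<longrightarrow> vs M n = 0) \<and> (\<forall>i\<in>{K..<M}. L (vs M) i = f i)"
    using ex by metis
  define C where "C = (\<Sum>n. (cmod (f n))^2) / \<eta>^2"
  have fs: "summable (\<lambda>n. (cmod (f n))^2)" using f by (simp add: l2_iff)
  have bndM: "(\<Sum>i<M. (cmod (vs M i))^2) \<le> C" for M
  proof -
    let ?v = "vs M"
    define S where "S = (\<Sum>i<M. (cmod (?v i))^2)"
    have "(\<Sum>i<M. (J ?v i - w * ?v i) * cnj (?v i)) = (\<Sum>i<M. f i * cnj (?v i))"
    proof (rule sum.cong[OF refl])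
      fix i assume "i \<in> {..<M}"
      then show "(J ?v i - w * ?v i) * cnj (?v i) = f i * cnj (?v i)"
        using vs[of M] by (cases "i < K") (auto simp: L_def)
    qed
    then have "\<eta> * S \<le> cmod (\<Sum>i<M. f i * cnj (?v i))"
      using coer[where v="?v" and M=M] vs[of M] unfolding S_def by (metis atLeastLessThan_iff not_le)
    also have "\<dots> \<le> (\<Sum>i<M. cmod (f i) * cmod (?v i))"
      by (rule order_trans[OF norm_sum]) (simp add: norm_mult)
    also have "\<dots> \<le> (\<Sum>i<M. (cmod (f i))^2 / (2*\<eta>) + \<eta> * (cmod (?v i))^2 / 2)"
      by (intro sum_mono amgm eta)
    also have "\<dots> = (\<Sum>i<M. (cmod (f i))^2) / (2*\<eta>) + \<eta> * S / 2"
      unfolding S_def by (simp add: sum.distrib sum_divide_distrib sum_distrib_left)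
    also have "(\<Sum>i<M. (cmod (f i))^2) \<le> (\<Sum>n. (cmod (f n))^2)"
      by (rule sum_le_suminf[OF fs]) auto
    finally have "\<eta> * S \<le> (\<Sum>n. (cmod (f n))^2) / (2*\<eta>) + \<eta> * S / 2"
      using eta by (simp add: divide_right_mono)
    then have "\<eta> * S / 2 \<le> (\<Sum>n. (cmod (f n))^2) / (2*\<eta>)" by simp
    then have "S \<le> (\<Sum>n. (cmod (f n))^2) / \<eta>^2" using eta
      by (simp add: field_simps power2_eq_square)
    then show ?thesis unfolding S_def C_def .
  qed
  have bnd: "(\<Sum>i<P. (cmod (vs M i))^2) \<le> C" for M P
  proof -
    have "(\<Sum>i<P. (cmod (vs M i))^2) = (\<Sum>i\<in>{..<P} \<inter> {..<M}. (cmod (vs M i))^2)"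
      by (rule sum.mono_neutral_right) (use vs[of M] in auto)
    also have "\<dots> \<le> (\<Sum>i<M. (cmod (vs M i))^2)"
      by (rule sum_mono2) auto
    finally show ?thesis using bndM[of M] by simp
  qed
  have cb: "cmod (vs M n) \<le> sqrt C" for M n
  proof -
    have "(cmod (vs M n))^2 \<le> (\<Sum>i<Suc n. (cmod (vs M i))^2)"
      by (rule member_le_sum) auto
    then have "(cmod (vs M n))^2 \<le> C" using bnd[where M=M and P="Suc n"] by simp
    then show ?thesis by (simp add: real_le_rsqrt)
  qed
  interpret ss: subseqs "\<lambda>n s. convergent (\<lambda>k. vs (s k) n)"
  proof
    fix n and s :: "nat \<Rightarrow> nat"
    assume "strict_mono s"
    have "bounded (range (\<lambda>k. vs (s k) n))"
      unfolding bounded_iff using cb by blast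
    from bounded_imp_convergent_subsequence[OF this]
    obtain l r where "strict_mono r" "((\<lambda>k. vs (s k) n) \<circ> r) \<longlonglongrightarrow> l"
      by blast
    then show "\<exists>r'. strict_mono r' \<and> convergent (\<lambda>k. vs ((s \<circ> r') k) n)"
      by (intro exI[of _ r]) (auto simp: convergent_def o_def)
  qed
  define \<sigma> where "\<sigma> = ss.diagseq"
  have smono: "strict_mono \<sigma>" unfolding \<sigma>_def by (rule ss.subseq_diagseq)
  have conv: "convergent (\<lambda>k. vs (\<sigma> k) n)" for n
  proof -
    have "convergent (\<lambda>k. vs ((ss.diagseq \<circ> (+) (Suc n)) k) n)"
      by (rule ss.diagseq_holds) (auto dest: convergent_subseq_convergent simp: o_def)
    then have "convergent (\<lambda>k. vs (ss.diagseq (k + Suc n)) n)" by (simp add: o_def add.commute)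
    then show ?thesis unfolding \<sigma>_def by (rule convergent_ignore_initial_segment[THEN iffD1])
  qed
  define u where "u n = lim (\<lambda>k. vs (\<sigma> k) n)" for n
  have lim: "(\<lambda>k. vs (\<sigma> k) n) \<longlonglongrightarrow> u n" for n
    unfolding u_def using conv[of n] by (simp add: convergent_LIMSEQ_iff)
  have u0: "u n = 0" if "n < K" for n
  proof -
    have "(\<lambda>k. vs (\<sigma> k) n) = (\<lambda>k. 0)"
    proof
      fix k show "vs (\<sigma> k) n = 0" using vs[of "\<sigma> k"] that by auto
    qed
    then show ?thesis using lim[of n] by (simp add: LIMSEQ_const_iff)
  qed
  have rows: "J u i - w * u i = f i" if "i \<ge> K" for i
  proof -
    have t: "(\<lambda>k. J (vs (\<sigma> k)) i - w * vs (\<sigma> k) i) \<longlonglongrightarrow> J u i - w * u i"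
      by (rule row_cont) (rule lim)
    have "eventually (\<lambda>k. J (vs (\<sigma> k)) i - w * vs (\<sigma> k) i = f i) sequentially"
      unfolding eventually_sequentially
    proof (intro exI allI impI)
      fix k assume "Suc i \<le> k"
      then have "i < \<sigma> k" using seq_suble[OF smono, of k] by linarith
      then show "J (vs (\<sigma> k)) i - w * vs (\<sigma> k) i = f i" using vs[of "\<sigma> k"] that by (auto simp: L_def)
    qed
    then have "(\<lambda>k. J (vs (\<sigma> k)) i - w * vs (\<sigma> k) i) \<longlonglongrightarrow> f i" by (rule tendsto_eventually)
    then show ?thesis by (rule LIMSEQ_unique[OF t])
  qed
  have "summable (\<lambda>n. (cmod (u n))^2)"
  proof (rule summableI_nonneg_bounded)
    fix P
    have "(\<lambda>k. \<Sum>i<P. (cmod (vs (\<sigma> k) i))^2) \<longlonglongrightarrow> (\<Sum>i<P. (cmod (u i))^2)"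
      by (intro tendsto_intros lim)
    then show "(\<Sum>i<P. (cmod (u i))^2) \<le> C"
      by (rule LIMSEQ_le_const2) (use bnd in auto)
  qed auto
  then have "u \<in> l2seq" by (simp add: l2_iff)
  then show ?thesis using u0 rows by blast
qed

end

lemma l2_eventually: assumes "v \<in> l2seq" "\<And>n. n \<ge> k \<Longrightarrow> y n = v n" shows "y \<in> l2seq"
proof -
  have "eventually (\<lambda>n. (cmod (y n))^2 = (cmod (v n))^2) sequentially"
    unfolding eventually_sequentially using assms(2) by (intro exI[of _ k]) auto
  then have "summable (\<lambda>n. (cmod (y n))^2) = summable (\<lambda>n. (cmod (v n))^2)" by (rule summable_cong)
  then show ?thesis using assms(1) unfolding l2_iff by simp
qed

lemma l2_zero_iff: "u \<in> l2seq \<Longrightarrow> (\<Sum>n. (cmod (u n))^2) = 0 \<Longrightarrow> u = (\<lambda>n. 0)"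
  unfolding l2_iff by (subst (asm) suminf_eq_zero_iff) auto

context jset begin

lemma jac_add: "J (\<lambda>n. a n + b n) i = J a i + J b i"
  by (simp add: jac_def algebra_simps)
lemma jac_scale: "J (\<lambda>n. c * a n) i = c * J a i"
  by (simp add: jac_def algebra_simps)
lemma jac_diff: "J (\<lambda>n. a n - b n) i = J a i - J b i"
  by (simp add: jac_def algebra_simps)

lemma bbc_nz: "complex_of_real (bb i) \<noteq> 0" using bb_nz by simp

lemma fwd_unique:
  assumes rows: "\<And>i. i \<ge> Suc k \<Longrightarrow> J y i - w * y i = 0"
    and y0: "y k = 0" and y1: "y (Suc k) = 0"
  shows "n \<ge> k \<Longrightarrow> y n = 0"
proof -
  have "y (k + j) = 0 \<and> y (k + Suc j) = 0" for j
  proof (induction j)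
    case 0 then show ?case using y0 y1 by simp
  next
    case (Suc j)
    have r: "J y (k + Suc j) - w * y (k + Suc j) = 0" using rows[of "k + Suc j"] by simp
    have "J y (k + Suc j) = of_real (bb (k + j)) * y (k + j) + of_real (real (Suc (Suc (k + j)))) * y (k + Suc j)
          + of_real (bb (Suc (k + j))) * y (Suc (Suc (k + j)))"
      using jac_Suc[of y "k + j"] by simp
    then have "of_real (bb (Suc (k + j))) * y (k + Suc (Suc j)) = 0" using r Suc.IH by simp
    then show ?case using Suc.IH bbc_nz by simp
  qed
  moreover assume "n \<ge> k"
  ultimately show "y n = 0" by (metis le_Suc_ex)
qed

lemma fwd_unique0:
  assumes rows: "\<And>i. J y i - w * y i = 0" and y0: "y 0 = 0"
  shows "y n = 0"
proof -
  have "J y 0 - w * y 0 = 0" by (rule rows)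
  then have "of_real (bb 0) * y (Suc 0) = 0" using y0 by (simp add: jac_0)
  then have "y (Suc 0) = 0" using bbc_nz by simp
  then show ?thesis using fwd_unique[of 0 y w n] rows y0 by simp
qed

primrec fpair :: "(nat \<Rightarrow> complex) \<Rightarrow> complex \<Rightarrow> complex \<Rightarrow> nat \<Rightarrow> complex \<times> complex" where
  "fpair h w y0 0 = (y0, (h 0 - (1 - w) * y0) / of_real (bb 0))"
| "fpair h w y0 (Suc n) = (snd (fpair h w y0 n),
     (h (Suc n) - of_real (bb n) * fst (fpair h w y0 n) - (of_real (real (Suc (Suc n))) - w) * snd (fpair h w y0 n))
       / of_real (bb (Suc n)))"

lemma fwd_exists: "\<exists>y. y 0 = y0 \<and> (\<forall>i. J y i - w * y i = h i)"
proof -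
  define y where "y n = fst (fpair h w y0 n)" for n
  have ys: "y (Suc n) = snd (fpair h w y0 n)" for n by (simp add: y_def)
  have "J y i - w * y i = h i" for i
  proof (cases i)
    case 0
    have "J y 0 - w * y 0 = (1 - w) * y0 + of_real (bb 0) * y (Suc 0)"
      by (simp add: jac_0 y_def algebra_simps)
    also have "y (Suc 0) = (h 0 - (1 - w) * y0) / of_real (bb 0)" by (simp add: ys)
    finally show ?thesis using 0 bbc_nz[of 0] by simp
  next
    case (Suc j)
    have "J y (Suc j) - w * y (Suc j) = of_real (bb j) * y j + (of_real (real (Suc (Suc j))) - w) * y (Suc j)
           + of_real (bb (Suc j)) * y (Suc (Suc j))"
      by (simp add: jac_Suc algebra_simps)
    also have "y (Suc (Suc j)) = (h (Suc j) - of_real (bb j) * y j - (of_real (real (Suc (Suc j))) - w) * y (Suc j))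
       / of_real (bb (Suc j))"
      by (simp add: ys y_def)
    finally show ?thesis using Suc bbc_nz[of "Suc j"] by simp
  qed
  then show ?thesis by (intro exI[of _ y]) (simp add: y_def)
qed

lemma eig_iff: "jac_eigenvalue c1 c2 w \<longleftrightarrow> (\<exists>u\<in>dom. (\<forall>n. J u n = w * u n) \<and> u \<noteq> (\<lambda>n. 0))"
  unfolding jac_eigenvalue_def jac_eigenspace_def by (auto simp: fun_eq_iff)

lemma bij_crit:
  assumes noeig: "\<not> jac_eigenvalue c1 c2 w"
    and surj: "\<And>f. f \<in> l2seq \<Longrightarrow> \<exists>u\<in>l2seq. \<forall>i. J u i - w * u i = f i"
  shows "bij_betw (\<lambda>u n. J u n - w * u n) dom l2seq"
proof (rule bij_betwI')
  fix u v assume u: "u \<in> dom" and v: "v \<in> dom"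
  show "((\<lambda>n. J u n - w * u n) = (\<lambda>n. J v n - w * v n)) = (u = v)"
  proof
    assume e: "(\<lambda>n. J u n - w * u n) = (\<lambda>n. J v n - w * v n)"
    define d where "d = (\<lambda>n. u n - v n)"
    have jd: "J (\<lambda>n. u n - v n) = (\<lambda>i. J u i - J v i)" by (simp add: fun_eq_iff jac_diff)
    have "J d \<in> l2seq" unfolding d_def jd using u v by (auto simp: jac_dom_def intro: l2_diff)
    moreover have "d \<in> l2seq" unfolding d_def using u v by (auto simp: jac_dom_def intro: l2_diff)
    ultimately have dd: "d \<in> dom" by (simp add: jac_dom_def)
    have "J d n = w * d n" for n
      using fun_cong[OF e, of n] unfolding d_def jac_diff by (simp add: algebra_simps)
    then have "d = (\<lambda>n. 0)" using noeig dd unfolding eig_iff by blast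
    then show "u = v" by (auto simp: d_def fun_eq_iff)
  qed simp
next
  fix u assume "u \<in> dom"
  then show "(\<lambda>n. J u n - w * u n) \<in> l2seq" unfolding jac_dom_def by (auto intro: l2_diff l2_scale)
next
  fix f assume f: "f \<in> l2seq"
  obtain u where u: "u \<in> l2seq" "\<forall>i. J u i - w * u i = f i" using surj[OF f] by blast
  have "J u = (\<lambda>n. f n + w * u n)" using u(2) by (auto simp: fun_eq_iff algebra_simps)
  then have "u \<in> dom" using u f unfolding jac_dom_def by (auto intro: l2_add l2_scale)
  moreover have "f = (\<lambda>n. J u n - w * u n)" using u(2) by auto
  ultimately show "\<exists>u\<in>dom. f = (\<lambda>n. J u n - w * u n)" by blast
qed

lemma ip_eig:
  assumes "u \<in> l2seq" "\<forall>n. J u n = w * u n"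
  shows "ip (J u) u = w * of_real (\<Sum>n. (cmod (u n))^2)"
proof -
  have "(\<lambda>n. (cmod (u n))^2) sums (\<Sum>n. (cmod (u n))^2)" using assms(1) by (simp add: l2_iff summable_sums)
  then have "(\<lambda>n. complex_of_real ((cmod (u n))^2)) sums complex_of_real (\<Sum>n. (cmod (u n))^2)"
    by (rule sums_of_real)
  then have "(\<lambda>n. w * of_real ((cmod (u n))^2)) sums (w * of_real (\<Sum>n. (cmod (u n))^2))"
    by (rule sums_mult)
  moreover have "(\<lambda>n. w * of_real ((cmod (u n))^2)) = (\<lambda>n. J u n * cnj (u n))"
  proof
    fix n show "w * complex_of_real ((cmod (u n))^2) = J u n * cnj (u n)"
      unfolding complex_norm_square using assms(2) by (simp add: mult.assoc)
  qed
  ultimately show ?thesis unfolding ip_def by (simp add: sums_iff)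
qed

lemma noeig_nonreal: assumes "Im w \<noteq> 0" shows "\<not> jac_eigenvalue c1 c2 w"
proof
  assume "jac_eigenvalue c1 c2 w"
  then obtain u where u: "u \<in> dom" "\<forall>n. J u n = w * u n" "u \<noteq> (\<lambda>n. 0)" unfolding eig_iff by blast
  have ul: "u \<in> l2seq" using u by (simp add: jac_dom_def)
  have "Im (ip (J u) u) = 0" by (rule ip_real_dom[OF u(1)])
  then have "Im w * (\<Sum>n. (cmod (u n))^2) = 0" using ip_eig[OF ul u(2)] by simp
  then have "(\<Sum>n. (cmod (u n))^2) = 0" using assms by simp
  then show False using l2_zero_iff[OF ul] u(3) by simp
qed

lemma noeig_low: assumes "x < 1/2 - dl" shows "\<not> jac_eigenvalue c1 c2 (of_real x)"
proof
  assume "jac_eigenvalue c1 c2 (of_real x)"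
  then obtain u where u: "u \<in> dom" "\<forall>n. J u n = of_real x * u n" "u \<noteq> (\<lambda>n. 0)" unfolding eig_iff by blast
  have ul: "u \<in> l2seq" using u by (simp add: jac_dom_def)
  have "Re (ip (J u) u) \<ge> (\<Sum>n. tt n * (cmod (u n))^2)" by (rule form_dom[OF u(1)])
  moreover have "(\<Sum>n. tt n * (cmod (u n))^2) \<ge> (\<Sum>n. (1/2 - dl) * (cmod (u n))^2)"
    using ul tt_ge_min by (intro suminf_le summable_tt summable_mult) (auto simp: l2_iff intro: mult_right_mono)
  moreover have "(\<Sum>n. (1/2 - dl) * (cmod (u n))^2) = (1/2 - dl) * (\<Sum>n. (cmod (u n))^2)"
    using ul by (simp add: l2_iff suminf_mult)
  moreover have "Re (ip (J u) u) = x * (\<Sum>n. (cmod (u n))^2)" using ip_eig[OF ul u(2)] by simp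
  ultimately have "(1/2 - dl - x) * (\<Sum>n. (cmod (u n))^2) \<le> 0" by (simp add: algebra_simps)
  moreover have "(\<Sum>n. (cmod (u n))^2) \<ge> 0" using ul by (intro suminf_nonneg) (auto simp: l2_iff)
  ultimately have "(\<Sum>n. (cmod (u n))^2) = 0" using assms by (simp add: mult_le_0_iff)
  then show False using l2_zero_iff[OF ul] u(3) by simp
qed

end

context jset begin

lemma row3: "J (\<lambda>n. a * p n + b * q n + c * r n) i - w * (a * p i + b * q i + c * r i)
   = a * (J p i - w * p i) + b * (J q i - w * q i) + c * (J r i - w * r i)"
  by (simp add: jac_def algebra_simps)

lemma im_fin:
  assumes "\<And>n. n \<ge> M \<Longrightarrow> v n = 0"
  shows "Im (\<Sum>i<M. J v i * cnj (v i)) = 0"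
proof (cases M)
  case 0 then show ?thesis by simp
next
  case (Suc N)
  define S where "S = (\<Sum>i<M. J v i * cnj (v i))"
  have "(\<Sum>i<Suc N. J v i * cnj (v i) - v i * cnj (J v i)) = 0"
    unfolding green using assms[of "Suc N"] Suc by simp
  moreover have "(\<Sum>i<Suc N. J v i * cnj (v i) - v i * cnj (J v i)) = S - cnj S"
    unfolding S_def Suc by (simp add: sum_subtractf cnj_sum mult.commute)
  ultimately have "S = cnj S" by simp
  then show ?thesis unfolding S_def by (metis cnj.sel(2) complex_cnj_cancel_iff equal_neg_zero)
qed

lemma quad_split: "(\<Sum>i<M. (J v i - w * v i) * cnj (v i)) =
    (\<Sum>i<M. J v i * cnj (v i)) - w * of_real (\<Sum>i<M. (cmod (v i))^2)"
proof -
  have "(\<Sum>i<M. (J v i - w * v i) * cnj (v i)) = (\<Sum>i<M. J v i * cnj (v i)) - (\<Sum>i<M. w * (v i * cnj (v i)))"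
    by (simp add: sum_subtractf algebra_simps)
  also have "(\<Sum>i<M. w * (v i * cnj (v i))) = w * (\<Sum>i<M. complex_of_real ((cmod (v i))^2))"
    by (simp only: complex_norm_square sum_distrib_left)
  also have "\<dots> = w * of_real (\<Sum>i<M. (cmod (v i))^2)"
    by (simp only: of_real_sum)
  finally show ?thesis .
qed

lemma coer_nonreal:
  assumes "\<And>n. n < 0 \<or> n \<ge> M \<Longrightarrow> v n = 0"
  shows "\<bar>Im w\<bar> * (\<Sum>i<M. (cmod (v i))^2) \<le> cmod (\<Sum>i<M. (J v i - w * v i) * cnj (v i))"
proof -
  have "Im (\<Sum>i<M. (J v i - w * v i) * cnj (v i)) = - Im w * (\<Sum>i<M. (cmod (v i))^2)"
    unfolding quad_split using im_fin[of M v] assms by simp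
  then have "\<bar>Im w\<bar> * (\<Sum>i<M. (cmod (v i))^2) = \<bar>Im (\<Sum>i<M. (J v i - w * v i) * cnj (v i))\<bar>"
    by (simp add: abs_mult sum_nonneg)
  also have "\<dots> \<le> cmod (\<Sum>i<M. (J v i - w * v i) * cnj (v i))" by (rule abs_Im_le_cmod)
  finally show ?thesis .
qed

lemma bij_nonreal:
  assumes "Im w \<noteq> 0"
  shows "bij_betw (\<lambda>u n. J u n - w * u n) dom l2seq"
proof (rule bij_crit)
  show "\<not> jac_eigenvalue c1 c2 w" by (rule noeig_nonreal[OF assms])
  fix f assume "f \<in> l2seq"
  from galerkin[of "\<bar>Im w\<bar>" 0 w f, OF _ coer_nonreal this] assms
  show "\<exists>u\<in>l2seq. \<forall>i. J u i - w * u i = f i" by auto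
qed

lemma coer_tail:
  assumes eta: "\<And>i. i \<ge> K \<Longrightarrow> tt i - x \<ge> \<eta>" and eta0: "\<eta> \<ge> 0"
    and v: "\<And>n. n < K \<or> n \<ge> M \<Longrightarrow> v n = 0"
  shows "\<eta> * (\<Sum>i<M. (cmod (v i))^2) \<le> cmod (\<Sum>i<M. (J v i - of_real x * v i) * cnj (v i))"
proof (cases M)
  case 0 then show ?thesis by simp
next
  case (Suc N)
  have fb: "Re (\<Sum>i<Suc N. J v i * cnj (v i)) \<ge> (\<Sum>i<Suc N. tt i * (cmod (v i))^2)"
  proof -
    have "v (Suc N) = 0" using v Suc by simp
    moreover have "be N * (cmod (v N))^2 \<ge> 0" using be_nonneg by simp
    ultimately show ?thesis using form_bound[of v N] by simp
  qed
  have "\<eta> * (\<Sum>i<M. (cmod (v i))^2) = (\<Sum>i<M. \<eta> * (cmod (v i))^2)" by (simp add: sum_distrib_left)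
  also have "\<dots> \<le> (\<Sum>i<M. (tt i - x) * (cmod (v i))^2)"
  proof (rule sum_mono)
    fix i assume "i \<in> {..<M}"
    show "\<eta> * (cmod (v i))^2 \<le> (tt i - x) * (cmod (v i))^2"
    proof (cases "i < K")
      case True then show ?thesis using v[of i] by simp
    next
      case False then show ?thesis using eta[of i] by (intro mult_right_mono) auto
    qed
  qed
  also have "\<dots> = (\<Sum>i<M. tt i * (cmod (v i))^2) - x * (\<Sum>i<M. (cmod (v i))^2)"
    by (simp add: sum_subtractf sum_distrib_left algebra_simps)
  also have "\<dots> \<le> Re (\<Sum>i<M. J v i * cnj (v i)) - x * (\<Sum>i<M. (cmod (v i))^2)"
    using fb Suc by simp
  also have "\<dots> = Re (\<Sum>i<M. (J v i - of_real x * v i) * cnj (v i))"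
    unfolding quad_split by simp
  also have "\<dots> \<le> cmod (\<Sum>i<M. (J v i - of_real x * v i) * cnj (v i))" by (rule complex_Re_le_cmod)
  finally show ?thesis .
qed

lemma ee_l2: "ee k \<in> l2seq" by (rule l2_finsupp[of "Suc k"]) (auto simp: ee_def)

lemma Jee_l2: "J (ee k) \<in> l2seq"
proof (rule l2_finsupp[of "Suc (Suc k)"])
  fix n assume "n \<ge> Suc (Suc k)"
  then show "J (ee k) n = 0" by (simp add: jac_eq ee_def)
qed

lemma bij_real:
  assumes x: "x < 1/2" and ne: "\<not> jac_eigenvalue c1 c2 (of_real x)"
  shows "bij_betw (\<lambda>u n. J u n - of_real x * u n) dom l2seq"
proof (rule bij_crit[OF ne])
  fix f assume f: "f \<in> l2seq"
  define \<eta> where "\<eta> = (1/2 - x) / 2"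
  have eta: "\<eta> > 0" using x by (simp add: \<eta>_def)
  define k where "k = nat \<lceil>1/\<eta>\<rceil>"
  have etaK: "tt i - x \<ge> \<eta>" if "i \<ge> Suc k" for i
  proof -
    have "real (Suc i) > 1/\<eta>" using that unfolding k_def by linarith
    then have "1 / real (Suc i) < \<eta>" using eta by (simp add: field_simps)
    moreover have "tt i \<ge> 1/2 - 1 / real (Suc i)" by (rule tt_ge_inv)
    ultimately have "tt i > 1/2 - \<eta>" by linarith
    moreover have "2 * \<eta> = 1/2 - x" by (simp add: \<eta>_def)
    ultimately show ?thesis by linarith
  qed
  let ?w = "complex_of_real x"
  have coerK: "\<eta> * (\<Sum>i<M. (cmod (v i))^2) \<le> cmod (\<Sum>i<M. (J v i - ?w * v i) * cnj (v i))"
    if "\<And>n. n < Suc k \<or> n \<ge> M \<Longrightarrow> v n = 0" for v M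
    by (rule coer_tail[OF etaK _ that]) (use eta in auto)
  obtain u where u: "u \<in> l2seq" "\<forall>n<Suc k. u n = 0" "\<forall>i\<ge>Suc k. J u i - ?w * u i = f i"
    using galerkin[of \<eta> "Suc k" ?w f, OF eta coerK f] by auto
  define g where "g = (\<lambda>i. - (J (ee k) i - ?w * ee k i))"
  have gl: "g \<in> l2seq" unfolding g_def by (intro l2_minus l2_diff l2_scale ee_l2 Jee_l2)
  obtain \<psi>' where ps': "\<psi>' \<in> l2seq" "\<forall>n<Suc k. \<psi>' n = 0" "\<forall>i\<ge>Suc k. J \<psi>' i - ?w * \<psi>' i = g i"
    using galerkin[of \<eta> "Suc k" ?w g, OF eta coerK gl] by auto
  define \<psi> where "\<psi> = (\<lambda>n. 1 * ee k n + 1 * \<psi>' n + 0 * \<psi>' n)"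
  have psl: "\<psi> \<in> l2seq" unfolding \<psi>_def using ps'(1) ee_l2 by (simp add: l2_add)
  have psk: "\<psi> k = 1" using ps'(2) by (simp add: \<psi>_def ee_def)
  have psr: "J \<psi> i - ?w * \<psi> i = 0" if "i \<ge> Suc k" for i
    unfolding \<psi>_def row3 using ps'(3) that by (simp add: g_def)
  obtain \<phi> where ph: "\<phi> 0 = 1" "\<forall>i. J \<phi> i - ?w * \<phi> i = 0" using fwd_exists[of 1 ?w "\<lambda>_. 0"] by auto
  obtain p where pp: "p 0 = 0" "\<forall>i. J p i - ?w * p i = f i" using fwd_exists[of 0 ?w f] by auto
  define \<Delta> where "\<Delta> = \<phi> (Suc k) - \<phi> k * \<psi> (Suc k)"
  have Dnz: "\<Delta> \<noteq> 0"
  proof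
    assume D0: "\<Delta> = 0"
    define z where "z = (\<lambda>n. 1 * \<phi> n + (- \<phi> k) * \<psi> n + 0 * \<psi> n)"
    have zr: "J z i - ?w * z i = 0" if "i \<ge> Suc k" for i
      unfolding z_def row3 using ph(2) psr[OF that] by simp
    have zk: "z k = 0" using psk by (simp add: z_def)
    have zk1: "z (Suc k) = 0" using D0 by (simp add: z_def \<Delta>_def)
    have z0: "z n = 0" if "n \<ge> k" for n by (rule fwd_unique[OF zr zk zk1 that])
    have "\<phi> n = \<phi> k * \<psi> n" if "n \<ge> k" for n
    proof -
      have "\<phi> n - \<phi> k * \<psi> n = 0" using z0[OF that] unfolding z_def by simp
      then show ?thesis by simp
    qed
    moreover have "(\<lambda>n. \<phi> k * \<psi> n) \<in> l2seq" by (rule l2_scale[OF psl])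
    ultimately have phl: "\<phi> \<in> l2seq" using l2_eventually[of "\<lambda>n. \<phi> k * \<psi> n" k \<phi>] by blast
    have Jph: "J \<phi> = (\<lambda>n. ?w * \<phi> n)" using ph(2) by (auto simp: fun_eq_iff)
    have "\<phi> \<in> dom" unfolding jac_dom_def using phl Jph by (auto intro: l2_scale)
    moreover have "\<phi> \<noteq> (\<lambda>n. 0)"
    proof
      assume "\<phi> = (\<lambda>n. 0)" then have "\<phi> 0 = 0" by simp
      with ph(1) show False by simp
    qed
    moreover have "\<forall>n. J \<phi> n = ?w * \<phi> n" using Jph by simp
    ultimately have "jac_eigenvalue c1 c2 ?w" unfolding eig_iff by blast
    then show False using ne by simp
  qed
  define s where "s = (u (Suc k) + p k * \<psi> (Suc k) - p (Suc k)) / \<Delta>"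
  define r where "r = p k + s * \<phi> k"
  define y where "y = (\<lambda>n. 1 * p n + s * \<phi> n + 0 * \<phi> n)"
  have yr: "J y i - ?w * y i = f i" for i unfolding y_def row3 using pp(2) ph(2) by simp
  define z where "z = (\<lambda>n. 1 * y n + (-1) * u n + (- r) * \<psi> n)"
  have zr: "J z i - ?w * z i = 0" if "i \<ge> Suc k" for i
    unfolding z_def row3 using yr[of i] u(3) psr[OF that] that by simp
  have zk: "z k = 0" using u(2) psk by (simp add: z_def y_def r_def)
  have zk1: "z (Suc k) = 0"
  proof -
    have "z (Suc k) = p (Suc k) + s * \<phi> (Suc k) - u (Suc k) - (p k + s * \<phi> k) * \<psi> (Suc k)"
      by (simp add: z_def y_def r_def algebra_simps)
    also have "\<dots> = p (Suc k) - u (Suc k) - p k * \<psi> (Suc k) + s * \<Delta>"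
      by (simp add: \<Delta>_def algebra_simps)
    also have "s * \<Delta> = u (Suc k) + p k * \<psi> (Suc k) - p (Suc k)" using Dnz by (simp add: s_def)
    finally show ?thesis by simp
  qed
  have z0: "z n = 0" if "n \<ge> k" for n by (rule fwd_unique[OF zr zk zk1 that])
  have "y n = u n + r * \<psi> n" if "n \<ge> k" for n
  proof -
    have "y n - (u n + r * \<psi> n) = 0" using z0[OF that] unfolding z_def by (simp add: algebra_simps)
    then show ?thesis by simp
  qed
  moreover have "(\<lambda>n. u n + r * \<psi> n) \<in> l2seq" by (rule l2_add[OF u(1) l2_scale[OF psl]])
  ultimately have "y \<in> l2seq" using l2_eventually[of "\<lambda>n. u n + r * \<psi> n" k y] by blast
  then show "\<exists>u\<in>l2seq. \<forall>i. J u i - ?w * u i = f i" using yr by blast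
qed

lemma eig_fin: "fin_dim_seqs (jac_eigenspace c1 c2 w)"
proof -
  obtain \<phi> where ph: "\<phi> 0 = 1" "\<forall>i. J \<phi> i - w * \<phi> i = 0" using fwd_exists[of 1 w "\<lambda>_. 0"] by auto
  show ?thesis unfolding fin_dim_seqs_def
  proof (intro exI[of _ "{\<phi>}"] conjI ballI)
    fix u assume "u \<in> jac_eigenspace c1 c2 w"
    then have Ju: "J u i = w * u i" for i by (auto simp: jac_eigenspace_def fun_eq_iff)
    define d where "d = (\<lambda>n. 1 * u n + (- u 0) * \<phi> n + 0 * \<phi> n)"
    have "J d i - w * d i = 0" for i unfolding d_def row3 using ph(2) Ju[of i] by simp
    moreover have "d 0 = 0" using ph(1) by (simp add: d_def)
    ultimately have "d n = 0" for n by (rule fwd_unique0)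
    have "u = (\<lambda>n. u 0 * \<phi> n)"
    proof
      fix n have "u n - u 0 * \<phi> n = 0" using \<open>\<And>n. d n = 0\<close>[of n] by (simp add: d_def)
      then show "u n = u 0 * \<phi> n" by simp
    qed
    then show "\<exists>c. u = (\<lambda>n. \<Sum>b\<in>{\<phi>}. c b * b n)" by (intro exI[of _ "\<lambda>_. u 0"]) simp
  qed simp
qed

end

lemma ip_bilin:
  assumes fin: "finite F" and l2: "\<And>x. x \<in> F \<Longrightarrow> f x \<in> l2seq"
  shows "ip (\<lambda>n. \<Sum>x\<in>F. a x * f x n) (\<lambda>n. \<Sum>y\<in>F. c y * f y n)
       = (\<Sum>x\<in>F. \<Sum>y\<in>F. a x * cnj (c y) * ip (f x) (f y))"
proof -
  have "(\<lambda>n. (\<Sum>x\<in>F. a x * f x n) * cnj (\<Sum>y\<in>F. c y * f y n))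
      = (\<lambda>n. \<Sum>x\<in>F. \<Sum>y\<in>F. a x * cnj (c y) * (f x n * cnj (f y n)))"
    by (rule ext) (simp add: sum_product ac_simps)
  then have "ip (\<lambda>n. \<Sum>x\<in>F. a x * f x n) (\<lambda>n. \<Sum>y\<in>F. c y * f y n)
      = (\<Sum>n. \<Sum>x\<in>F. \<Sum>y\<in>F. a x * cnj (c y) * (f x n * cnj (f y n)))"
    unfolding ip_def by simp
  also have "\<dots> = (\<Sum>x\<in>F. \<Sum>n. \<Sum>y\<in>F. a x * cnj (c y) * (f x n * cnj (f y n)))"
    by (rule suminf_sum) (intro summable_sum summable_mult summable_ip l2, auto)
  also have "\<dots> = (\<Sum>x\<in>F. \<Sum>y\<in>F. \<Sum>n. a x * cnj (c y) * (f x n * cnj (f y n)))"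
    by (rule sum.cong[OF refl], rule suminf_sum) (intro summable_mult summable_ip l2, auto)
  also have "\<dots> = (\<Sum>x\<in>F. \<Sum>y\<in>F. a x * cnj (c y) * ip (f x) (f y))"
    unfolding ip_def by (intro sum.cong refl suminf_mult summable_ip l2)
  finally show ?thesis .
qed

lemma ip_self: "u \<in> l2seq \<Longrightarrow> ip u u = of_real (\<Sum>n. (cmod (u n))^2)"
proof -
  assume u: "u \<in> l2seq"
  have "(\<lambda>n. (cmod (u n))^2) sums (\<Sum>n. (cmod (u n))^2)" using u by (simp add: l2_iff summable_sums)
  then have "(\<lambda>n. complex_of_real ((cmod (u n))^2)) sums complex_of_real (\<Sum>n. (cmod (u n))^2)"
    by (rule sums_of_real)
  then have "(\<lambda>n. u n * cnj (u n)) sums complex_of_real (\<Sum>n. (cmod (u n))^2)"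
    by (simp only: complex_norm_square)
  then show ?thesis unfolding ip_def by (simp add: sums_iff)
qed

lemma ip_scale_left: "u \<in> l2seq \<Longrightarrow> v \<in> l2seq \<Longrightarrow> ip (\<lambda>n. c * u n) v = c * ip u v"
  unfolding ip_def by (simp add: mult.assoc suminf_mult summable_ip)

lemma ip_scale_right: "u \<in> l2seq \<Longrightarrow> v \<in> l2seq \<Longrightarrow> ip u (\<lambda>n. c * v n) = cnj c * ip u v"
proof -
  assume a: "u \<in> l2seq" "v \<in> l2seq"
  have "ip u (\<lambda>n. c * v n) = (\<Sum>n. cnj c * (u n * cnj (v n)))" unfolding ip_def
    by (simp add: algebra_simps)
  also have "\<dots> = cnj c * ip u v" unfolding ip_def using summable_ip[OF a] by (rule suminf_mult)
  finally show ?thesis .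
qed

context jset begin

lemma eig_count_fin:
  assumes eps: "\<epsilon> > 0" and F: "finite F" "F \<subseteq> {x::real. jac_eigenvalue c1 c2 (of_real x) \<and> x < 1/2 - \<epsilon>}"
  shows "card F \<le> nat \<lfloor>1/\<epsilon>\<rfloor>"
proof (rule ccontr)
  define N where "N = nat \<lfloor>1/\<epsilon>\<rfloor>"
  assume "\<not> card F \<le> nat \<lfloor>1/\<epsilon>\<rfloor>"
  then have cF: "card F > card {..<N}" by (simp add: N_def)
  have "\<forall>x\<in>F. \<exists>u. u \<in> dom \<and> (\<forall>n. J u n = of_real x * u n) \<and> u \<noteq> (\<lambda>n. 0)"
    using F(2) unfolding eig_iff by blast
  then obtain e where e: "\<And>x. x \<in> F \<Longrightarrow> e x \<in> dom" "\<And>x n. x \<in> F \<Longrightarrow> J (e x) n = of_real x * e x n"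
      "\<And>x. x \<in> F \<Longrightarrow> e x \<noteq> (\<lambda>n. 0)"
    by metis
  have el: "e x \<in> l2seq" if "x \<in> F" for x using e(1)[OF that] by (simp add: jac_dom_def)
  have xlt: "x < 1/2 - \<epsilon>" if "x \<in> F" for x using F(2) that by auto
  obtain b where b: "\<exists>x\<in>F. b x \<noteq> 0" "\<forall>n\<in>{..<N}. (\<Sum>x\<in>F. b x * e x n) = 0"
    using dep_exists[of "{..<N}" F "\<lambda>x n. e x n"] F(1) cF by auto
  define u where "u = (\<lambda>n. \<Sum>x\<in>F. b x * e x n)"
  have ul: "u \<in> l2seq" unfolding u_def using F(1) el by (intro l2_sum l2_scale) auto
  have Ju: "J u = (\<lambda>n. \<Sum>x\<in>F. (b x * of_real x) * e x n)"
    unfolding u_def by (simp add: fun_eq_iff jac_lin e(2) mult.assoc)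
  have Jul: "J u \<in> l2seq" unfolding Ju using F(1) el by (intro l2_sum l2_scale) auto
  have ud: "u \<in> dom" using ul Jul by (simp add: jac_dom_def)
  define q where "q x = (\<Sum>n. (cmod (e x n))^2)" for x
  have qpos: "q x > 0" if "x \<in> F" for x
  proof -
    have "q x \<ge> 0" unfolding q_def using el[OF that] by (intro suminf_nonneg) (auto simp: l2_iff)
    moreover have "q x \<noteq> 0" using l2_zero_iff[OF el[OF that]] e(3)[OF that] by (auto simp: q_def)
    ultimately show ?thesis by simp
  qed
  have orth: "ip (e x) (e y) = 0" if "x \<in> F" "y \<in> F" "x \<noteq> y" for x y
  proof -
    have "ip (J (e x)) (e y) = ip (e x) (J (e y))" by (rule sym_dom[OF e(1)[OF that(1)] e(1)[OF that(2)]])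
    moreover have "J (e x) = (\<lambda>n. of_real x * e x n)" using e(2)[OF that(1)] by (simp add: fun_eq_iff)
    moreover have "J (e y) = (\<lambda>n. of_real y * e y n)" using e(2)[OF that(2)] by (simp add: fun_eq_iff)
    ultimately have "of_real x * ip (e x) (e y) = of_real y * ip (e x) (e y)"
      using ip_scale_left[OF el[OF that(1)] el[OF that(2)]] ip_scale_right[OF el[OF that(1)] el[OF that(2)]]
      by simp
    then have "(of_real x - of_real y) * ip (e x) (e y) = 0" by (simp add: algebra_simps)
    then show ?thesis using that(3) by simp
  qed
  have diag: "(\<Sum>x\<in>F. \<Sum>y\<in>F. a x * cnj (b y) * ip (e x) (e y)) = (\<Sum>x\<in>F. a x * cnj (b x) * of_real (q x))" for a
  proof (rule sum.cong[OF refl])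
    fix x assume x: "x \<in> F"
    have "(\<Sum>y\<in>F. a x * cnj (b y) * ip (e x) (e y)) = a x * cnj (b x) * ip (e x) (e x)
          + (\<Sum>y\<in>F - {x}. a x * cnj (b y) * ip (e x) (e y))"
      using F(1) x by (rule sum.remove)
    also have "(\<Sum>y\<in>F - {x}. a x * cnj (b y) * ip (e x) (e y)) = 0"
      using orth x by (intro sum.neutral) auto
    also have "ip (e x) (e x) = of_real (q x)" unfolding q_def by (rule ip_self[OF el[OF x]])
    finally show "(\<Sum>y\<in>F. a x * cnj (b y) * ip (e x) (e y)) = a x * cnj (b x) * of_real (q x)" by simp
  qed
  have bb_eq: "b x * cnj (b x) = of_real ((cmod (b x))^2)" for x by (rule complex_norm_square[symmetric])
  have "ip (J u) u = ip (\<lambda>n. \<Sum>x\<in>F. (b x * of_real x) * e x n) u" by (simp only: Ju)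
  also have "\<dots> = (\<Sum>x\<in>F. (b x * of_real x) * cnj (b x) * of_real (q x))"
    unfolding u_def by (simp only: ip_bilin[OF F(1) el] diag)
  also have "\<dots> = of_real (\<Sum>x\<in>F. x * (cmod (b x))^2 * q x)"
    by (simp add: bb_eq algebra_simps)
  finally have Q: "Re (ip (J u) u) = (\<Sum>x\<in>F. x * (cmod (b x))^2 * q x)" by simp
  have "ip u u = (\<Sum>x\<in>F. b x * cnj (b x) * of_real (q x))"
    unfolding u_def by (simp only: ip_bilin[OF F(1) el] diag)
  also have "\<dots> = of_real (\<Sum>x\<in>F. (cmod (b x))^2 * q x)"
    by (simp add: bb_eq)
  finally have Uc: "ip u u = of_real (\<Sum>x\<in>F. (cmod (b x))^2 * q x)" .
  have U: "(\<Sum>n. (cmod (u n))^2) = (\<Sum>x\<in>F. (cmod (b x))^2 * q x)"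
    using Uc[unfolded ip_self[OF ul]] by (simp only: of_real_eq_iff)
  have upper: "Re (ip (J u) u) < (1/2 - \<epsilon>) * (\<Sum>n. (cmod (u n))^2)"
  proof -
    have "(\<Sum>x\<in>F. x * (cmod (b x))^2 * q x) < (\<Sum>x\<in>F. (1/2 - \<epsilon>) * ((cmod (b x))^2 * q x))"
    proof (rule sum_strict_mono_ex1[OF F(1)])
      show "\<forall>x\<in>F. x * (cmod (b x))^2 * q x \<le> (1/2 - \<epsilon>) * ((cmod (b x))^2 * q x)"
      proof
        fix x assume x: "x \<in> F"
        have "x \<le> 1/2 - \<epsilon>" using xlt[OF x] by simp
        moreover have "0 \<le> (cmod (b x))^2 * q x" using qpos[OF x] by simp
        ultimately have "x * ((cmod (b x))^2 * q x) \<le> (1/2 - \<epsilon>) * ((cmod (b x))^2 * q x)"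
          by (rule mult_right_mono)
        then show "x * (cmod (b x))^2 * q x \<le> (1/2 - \<epsilon>) * ((cmod (b x))^2 * q x)"
          by (simp add: mult.assoc)
      qed
      obtain x where x: "x \<in> F" "b x \<noteq> 0" using b(1) by blast
      have "(cmod (b x))^2 * q x > 0" using x qpos[OF x(1)] by simp
      then have "x * ((cmod (b x))^2 * q x) < (1/2 - \<epsilon>) * ((cmod (b x))^2 * q x)"
        using xlt[OF x(1)] by (intro mult_strict_right_mono)
      then show "\<exists>x\<in>F. x * (cmod (b x))^2 * q x < (1/2 - \<epsilon>) * ((cmod (b x))^2 * q x)"
        using x(1) by (intro bexI[of _ x]) (simp_all add: mult.assoc)
    qed
    then show ?thesis unfolding Q U by (simp add: sum_distrib_left)
  qed
  have lower: "Re (ip (J u) u) \<ge> (1/2 - \<epsilon>) * (\<Sum>n. (cmod (u n))^2)"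
  proof -
    have "(\<Sum>n. tt n * (cmod (u n))^2) \<ge> (\<Sum>n. (1/2 - \<epsilon>) * (cmod (u n))^2)"
    proof (rule suminf_le)
      fix n
      show "(1/2 - \<epsilon>) * (cmod (u n))^2 \<le> tt n * (cmod (u n))^2"
      proof (cases "n < N")
        case True then show ?thesis using b(2) by (simp add: u_def)
      next
        case False
        then have "real (Suc n) > 1/\<epsilon>" unfolding N_def by linarith
        then have "1 / real (Suc n) < \<epsilon>" using eps by (simp add: field_simps)
        then have "tt n \<ge> 1/2 - \<epsilon>" using tt_ge_inv[of n] by linarith
        then show ?thesis by (intro mult_right_mono) auto
      qed
    qed (use ul in \<open>auto intro: summable_mult summable_tt simp: l2_iff\<close>)
    also have "(\<Sum>n. (1/2 - \<epsilon>) * (cmod (u n))^2) = (1/2 - \<epsilon>) * (\<Sum>n. (cmod (u n))^2)"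
      using ul by (simp add: l2_iff suminf_mult)
    finally show ?thesis using form_dom[OF ud] by linarith
  qed
  show False using upper lower by linarith
qed

lemma eig_count:
  assumes eps: "\<epsilon> > 0"
  shows "finite {x::real. jac_eigenvalue c1 c2 (of_real x) \<and> x < 1/2 - \<epsilon>}
     \<and> card {x::real. jac_eigenvalue c1 c2 (of_real x) \<and> x < 1/2 - \<epsilon>} \<le> nat \<lfloor>1/\<epsilon>\<rfloor>"
proof -
  let ?X = "{x::real. jac_eigenvalue c1 c2 (of_real x) \<and> x < 1/2 - \<epsilon>}"
  have fin: "finite ?X"
  proof (rule ccontr)
    assume "infinite ?X"
    then obtain B where B: "finite B" "card B = Suc (nat \<lfloor>1/\<epsilon>\<rfloor>)" "B \<subseteq> ?X"
      using infinite_arbitrarily_large by blast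
    then show False using eig_count_fin[OF eps B(1) B(3)] by simp
  qed
  then show ?thesis using eig_count_fin[OF eps fin] by simp
qed

end

context jset begin

lemma spec_iff: "w \<in> jac_spectrum c1 c2 \<longleftrightarrow> \<not> bij_betw (\<lambda>u n. J u n - w * u n) dom l2seq"
  by (simp add: jac_spectrum_def)

lemma not_spec_nonreal: "Im w \<noteq> 0 \<Longrightarrow> w \<notin> jac_spectrum c1 c2"
  using bij_nonreal by (simp add: spec_iff)

lemma not_spec_real: "x < 1/2 \<Longrightarrow> \<not> jac_eigenvalue c1 c2 (of_real x) \<Longrightarrow> of_real x \<notin> jac_spectrum c1 c2"
  using bij_real by (simp add: spec_iff)

lemma part1: "jac_spectrum c1 c2 \<inter> complex_of_real ` {..< min \<bar>c1\<bar> \<bar>c2\<bar>} = {}"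
proof -
  have "of_real x \<notin> jac_spectrum c1 c2" if "x < min \<bar>c1\<bar> \<bar>c2\<bar>" for x
  proof (rule not_spec_real)
    show "x < 1/2" using that min_eq dl_nonneg by linarith
    show "\<not> jac_eigenvalue c1 c2 (of_real x)" using that min_eq by (intro noeig_low) simp
  qed
  then show ?thesis by auto
qed

lemma part2:
  assumes z: "z \<in> jac_spectrum c1 c2" "z \<in> complex_of_real ` {min \<bar>c1\<bar> \<bar>c2\<bar> ..< 1/2}"
  shows "z \<in> jac_disc_spectrum c1 c2"
proof -
  obtain x where x: "z = of_real x" "x < 1/2" using z(2) by auto
  have eig: "jac_eigenvalue c1 c2 z" using not_spec_real[OF x(2)] z(1) x(1) by blast
  define \<epsilon> where "\<epsilon> = (1/2 - x) / 2"
  have eps: "\<epsilon> > 0" using x(2) by (simp add: \<epsilon>_def)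
  define E where "E = {y::real. jac_eigenvalue c1 c2 (of_real y) \<and> y < 1/2 - \<epsilon>} - {x}"
  have fE: "finite E" unfolding E_def using eig_count[OF eps] by simp
  define r where "r = Min (insert \<epsilon> ((\<lambda>y. \<bar>y - x\<bar>) ` E))"
  have rpos: "r > 0" unfolding r_def using fE eps by (simp add: E_def)
  have rle: "r \<le> \<epsilon>" unfolding r_def using fE by simp
  have rleE: "r \<le> \<bar>y - x\<bar>" if "y \<in> E" for y unfolding r_def using fE that by simp
  have nolim: "\<not> z islimpt jac_spectrum c1 c2"
  proof
    assume "z islimpt jac_spectrum c1 c2"
    then obtain w where w: "w \<in> jac_spectrum c1 c2" "w \<in> ball z r" "w \<noteq> z"
      unfolding islimpt_def using rpos by (meson centre_in_ball open_ball)
    show False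
    proof (cases "Im w = 0")
      case False then show False using not_spec_nonreal w(1) by blast
    next
      case True
      define y where "y = Re w"
      have wy: "w = of_real y" using True by (simp add: y_def complex_eq_iff)
      have "dist w z < r" using w(2) by (simp add: dist_commute)
      then have dyx: "\<bar>y - x\<bar> < r" using wy x(1) by (simp add: dist_norm norm_of_real[symmetric] of_real_diff[symmetric] del: of_real_diff)
      have yx: "y \<noteq> x" using w(3) wy x(1) by auto
      have yl: "y < 1/2 - \<epsilon>"
      proof -
        have "y < x + \<epsilon>" using dyx rle by linarith
        moreover have "2 * \<epsilon> = 1/2 - x" by (simp add: \<epsilon>_def)
        ultimately show ?thesis by linarith
      qed
      show False
      proof (cases "jac_eigenvalue c1 c2 (of_real y)")
        case True
        then have "y \<in> E" using yl yx by (simp add: E_def)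
        then show False using rleE dyx by fastforce
      next
        case False
        then have "of_real y \<notin> jac_spectrum c1 c2" using yl eps by (intro not_spec_real) auto
        then show False using w(1) wy by simp
      qed
    qed
  qed
  show ?thesis unfolding jac_disc_spectrum_def using z(1) nolim eig eig_fin by blast
qed

lemma part3:
  assumes eps: "\<epsilon> > 0"
  shows "finite {x::real. jac_eigenvalue c1 c2 (complex_of_real x) \<and> x < 1/2 - \<epsilon>} \<and>
           real (card {x::real. jac_eigenvalue c1 c2 (complex_of_real x) \<and> x < 1/2 - \<epsilon>}) \<le> 1 / \<epsilon>"
proof -
  have c: "finite {x::real. jac_eigenvalue c1 c2 (complex_of_real x) \<and> x < 1/2 - \<epsilon>}"
    "card {x::real. jac_eigenvalue c1 c2 (complex_of_real x) \<and> x < 1/2 - \<epsilon>} \<le> nat \<lfloor>1/\<epsilon>\<rfloor>"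
    using eig_count[OF eps] by auto
  have "real (nat \<lfloor>1/\<epsilon>\<rfloor>) \<le> 1/\<epsilon>" using eps by (simp add: of_nat_nat)
  then show ?thesis using c by (meson le_trans of_nat_le_iff order_trans)
qed

end

theorem theorem4:
  fixes c1 c2 :: real
  assumes "\<bar>c1\<bar> + \<bar>c2\<bar> = 1" and "c1 * c2 \<noteq> 0" and "\<bar>c1\<bar> \<noteq> \<bar>c2\<bar>"
  shows "jac_spectrum c1 c2 \<inter> complex_of_real ` {..< min \<bar>c1\<bar> \<bar>c2\<bar>} = {} \<and>
     jac_spectrum c1 c2 \<inter> complex_of_real ` {min \<bar>c1\<bar> \<bar>c2\<bar> ..< 1/2}
           \<subseteq> jac_disc_spectrum c1 c2 \<and>
     (\<forall>\<epsilon>::real. \<epsilon> > 0 \<longrightarrow>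
           finite {x::real. jac_eigenvalue c1 c2 (complex_of_real x) \<and> x < 1/2 - \<epsilon>} \<and>
           real (card {x::real. jac_eigenvalue c1 c2 (complex_of_real x) \<and> x < 1/2 - \<epsilon>})
             \<le> 1 / \<epsilon>)"
proof -
  interpret jset c1 c2 using assms by unfold_locales
  show ?thesis using part1 part2 part3 by blast
qed

end
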